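(* Fix $\beta\ge1$ and let $\{X_i\}_{i\ge1}$, $W_n$, $\xi$, $\mathcal H$ and $\alpha$ be as in the context, with $\sup_{i\ge1}\mathbb E[|X_i|^{2+\alpha}]<\infty$. For $f\in\mathcal H$ let $\xi_k:=f(W_k)-\mathbb E[f(W_k)]$ and $Z_l:=\sum_{4^{l-1}\le i<4^l}\frac{\xi_i}{i}$. Then for every $f\in\mathcal H$ there exist positive constants $M_3,M_4$ such that for all $1\le l<m$, $$\mathbb E[Z_lZ_m]\le 9M_3\cdot2^{l-m}+9M_4\cdot2^{\alpha(1-m)}.$$
   Context: Sub-linear expectation space $(\Omega,\mathscr H,\mathbb E)$: $(\Omega,\mathcal F)$ a measurable space, $\mathscr H$ a linear space of real measurable functions closed under $(X_1,\dots,X_n)\mapsto\varphi(X_1,\dots,X_n)$ for $\varphi\in C_{b,Lip}(\mathbb R^n)$ (bounded Lipschitz functions), and $\mathbb E:\mathscr H\to\mathbb R$ monotone, constant preserving, sub-additive and positively homogeneous; it is assumed $\mathbb E[X]=\sup_{P\in\mathcal P}E_P[X]$ for a family $\mathcal P$ of $\sigma$-additive probability measures. $(\widetilde\Omega,\widetilde{\mathscr H},\widetilde{\mathbb E})$ is another sub-linear expectation space. Both satisfy condition (A): for every $X$ and every sequence $f_n\in C_{b,Lip}(\mathbb R)$ with $f_n\downarrow0$, $\mathbb E[f_n(X)]\downarrow0$ (resp. $\widetilde{\mathbb E}[f_n(X)]\downarrow0$). Independence: $Y\in\mathscr H^n$ is independent of $X\in\mathscr H^m$ if $\mathbb E[\varphi(X,Y)]=\mathbb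 E\big[\mathbb E[\varphi(x,Y)]|_{x=X}\big]$ for all $\varphi\in C_{b,Lip}(\mathbb R^{m+n})$; $\{X_n\}$ is independent if $X_{n+1}$ is independent of $(X_1,\dots,X_n)$ for every $n$. Standing setting: $\{X_i\}$ is independent in $(\Omega,\mathscr H,\mathbb E)$ with $\mathbb E[X_i]=\mathbb E[-X_i]=0$, $\overline\sigma_i=\sqrt{\mathbb E[X_i^2]}$, $\underline\sigma_i=\sqrt{-\mathbb E[-X_i^2]}$, $\overline\sigma_i/\underline\sigma_i=\beta$ for all $i$, $0<\inf_i\underline\sigma_i^2\le\sup_i\overline\sigma_i^2<\infty$; $S_n=\sum_{i\le n}X_i$, $\sigma_i=(\underline\sigma_i+\overline\sigma_i)/2$, $B_n=\sqrt{\sum_{i\le n}\sigma_i^2}$, $W_n=S_n/B_n$. $\xi$ is $G$-normal under $\widetilde{\mathbb E}$ (for each $f\in C_{b,Lip}(\mathbb R)$, $u(t,x)=\widetilde{\mathbb E}[f(x+\sqrt t\xi)]$ is the unique viscosity solution of $\partial_tu-G(\partial_{xx}u)=0$, $u(0,\cdot)=f$, with $G(a)=\frac12\widetilde{\mathbb E}[a\xi^2]$), with $\sqrt{\widetilde{\mathbb E}[\xi^2]}=\frac{2\beta}{1+\beta}$, $\sqrt{-\widetilde{\mathbb E}[-\xi^2]}=\frac{2}{1+\beta}$. $\mathcal H:=\{f\in C_{b,Lip}(\mathbb R):\widetilde{\mathbb E}[f(\xi)]=-\widetilde{\mathbb E}[-f(\xi)]\}$. $\alpha\in(0,1)$ is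 the constant from Song's theorem (cited): there exist $\alpha\in(0,1)$ depending on $\beta$ and $C_{\alpha,\beta}>0$ such that for every such sequence and every $n$, $\sup_{|f|_{Lip}\le1}|\mathbb E[f(W_n)]-\widetilde{\mathbb E}[f(\xi)]|\le C_{\alpha,\beta}\sup_{1\le i\le n}\{\frac{\mathbb E[|X_i|^{2+\alpha}]}{\sigma_i^{2+\alpha}}(\frac{\sigma_i}{B_n})^\alpha\}$. *)

theory Defs
  imports "HOL-Probability.Probability"
begin

definition list_dist :: "real list \<Rightarrow> real list \<Rightarrow> real" where
  "list_dist xs ys = sqrt (\<Sum>i<length xs. (xs ! i - ys ! i)^2)"

text \<open>phi in C_{b,Lip}(R^n), functions on R^n represented on real lists of length n.\<close>
definition cblip :: "nat \<Rightarrow> (real list \<Rightarrow> real) \<Rightarrow> bool" where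
  "cblip n \<phi> \<longleftrightarrow>
     (\<exists>B. \<forall>xs. length xs = n \<longrightarrow> \<bar>\<phi> xs\<bar> \<le> B) \<and>
     (\<exists>L. \<forall>xs ys. length xs = n \<longrightarrow> length ys = n \<longrightarrow>
           \<bar>\<phi> xs - \<phi> ys\<bar> \<le> L * list_dist xs ys)"

definition cblip1 :: "(real \<Rightarrow> real) \<Rightarrow> bool" where
  "cblip1 f \<longleftrightarrow> (\<exists>B. \<forall>x. \<bar>f x\<bar> \<le> B) \<and> (\<exists>L. \<forall>x y. \<bar>f x - f y\<bar> \<le> L * \<bar>x - y\<bar>)"

section \<open>Sub-linear expectation spaces\<close>

definition sublinear_space ::
  "'w measure \<Rightarrow> ('w \<Rightarrow> real) set \<Rightarrow> (('w \<Rightarrow> real) \<Rightarrow> real) \<Rightarrow> bool" where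
  "sublinear_space M H E \<longleftrightarrow>
     H \<subseteq> borel_measurable M \<and>
     (\<lambda>_. 0) \<in> H \<and>
     (\<forall>X\<in>H. \<forall>Y\<in>H. (\<lambda>w. X w + Y w) \<in> H) \<and>
     (\<forall>X\<in>H. \<forall>c. (\<lambda>w. c * X w) \<in> H) \<and>
     (\<forall>Xs \<phi>. set Xs \<subseteq> H \<longrightarrow> cblip (length Xs) \<phi> \<longrightarrow>
        (\<lambda>w. \<phi> (map (\<lambda>X. X w) Xs)) \<in> H) \<and>
     (\<forall>X\<in>H. \<forall>Y\<in>H. (\<forall>w\<in>space M. X w \<le> Y w) \<longrightarrow> E X \<le> E Y) \<and>
     (\<forall>c. E (\<lambda>_. c) = c) \<and>
     (\<forall>X\<in>H. \<forall>Y\<in>H. E (\<lambda>w. X w + Y w) \<le> E X + E Y) \<and>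
     (\<forall>X\<in>H. \<forall>c\<ge>0. E (\<lambda>w. c * X w) = c * E X) \<and>
     (\<exists>\<P>. \<P> \<noteq> {} \<and> (\<forall>P\<in>\<P>. prob_space P \<and> sets P = sets M) \<and>
        (\<forall>X\<in>H. (\<forall>P\<in>\<P>. integrable P X \<and> integral\<^sup>L P X \<le> E X) \<and>
                 (\<forall>e>0. \<exists>P\<in>\<P>. E X - e < integral\<^sup>L P X)))"

definition condA :: "('w \<Rightarrow> real) set \<Rightarrow> (('w \<Rightarrow> real) \<Rightarrow> real) \<Rightarrow> bool" where
  "condA H E \<longleftrightarrow>
     (\<forall>X\<in>H. \<forall>fs :: nat \<Rightarrow> real \<Rightarrow> real.
        (\<forall>n. cblip1 (fs n)) \<longrightarrow> (\<forall>n x. fs (Suc n) x \<le> fs n x) \<longrightarrow>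
        (\<forall>x. (\<lambda>n. fs n x) \<longlonglongrightarrow> 0) \<longrightarrow>
        (\<lambda>n. E (\<lambda>w. fs n (X w))) \<longlonglongrightarrow> 0)"

definition indep_of :: "(('w \<Rightarrow> real) \<Rightarrow> real) \<Rightarrow> ('w \<Rightarrow> real) list \<Rightarrow> ('w \<Rightarrow> real) list \<Rightarrow> bool" where
  "indep_of E Ys Xs \<longleftrightarrow>
     (\<forall>\<phi>. cblip (length Xs + length Ys) \<phi> \<longrightarrow>
        E (\<lambda>w. \<phi> (map (\<lambda>X. X w) Xs @ map (\<lambda>Y. Y w) Ys)) =
        E (\<lambda>w. E (\<lambda>v. \<phi> (map (\<lambda>X. X w) Xs @ map (\<lambda>Y. Y v) Ys))))"

text \<open>Sequence X_1, X_2, ... (index 0 unused) is independent.\<close>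
definition indep_seq :: "(('w \<Rightarrow> real) \<Rightarrow> real) \<Rightarrow> (nat \<Rightarrow> 'w \<Rightarrow> real) \<Rightarrow> bool" where
  "indep_seq E X \<longleftrightarrow> (\<forall>n\<ge>1. indep_of E [X (n+1)] (map X [1..<n+1]))"

definition sig_up :: "(('w \<Rightarrow> real) \<Rightarrow> real) \<Rightarrow> (nat \<Rightarrow> 'w \<Rightarrow> real) \<Rightarrow> nat \<Rightarrow> real" where
  "sig_up E X i = sqrt (E (\<lambda>w. (X i w)^2))"

definition sig_lo :: "(('w \<Rightarrow> real) \<Rightarrow> real) \<Rightarrow> (nat \<Rightarrow> 'w \<Rightarrow> real) \<Rightarrow> nat \<Rightarrow> real" where
  "sig_lo E X i = sqrt (- (E (\<lambda>w. - ((X i w)^2))))"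

definition sigm :: "(('w \<Rightarrow> real) \<Rightarrow> real) \<Rightarrow> (nat \<Rightarrow> 'w \<Rightarrow> real) \<Rightarrow> nat \<Rightarrow> real" where
  "sigm E X i = (sig_lo E X i + sig_up E X i) / 2"

definition Bn :: "(('w \<Rightarrow> real) \<Rightarrow> real) \<Rightarrow> (nat \<Rightarrow> 'w \<Rightarrow> real) \<Rightarrow> nat \<Rightarrow> real" where
  "Bn E X n = sqrt (\<Sum>i=1..n. (sigm E X i)^2)"

definition Sn :: "(nat \<Rightarrow> 'w \<Rightarrow> real) \<Rightarrow> nat \<Rightarrow> 'w \<Rightarrow> real" where
  "Sn X n = (\<lambda>w. \<Sum>i=1..n. X i w)"

definition Wn :: "(('w \<Rightarrow> real) \<Rightarrow> real) \<Rightarrow> (nat \<Rightarrow> 'w \<Rightarrow> real) \<Rightarrow> nat \<Rightarrow> 'w \<Rightarrow> real" where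
  "Wn E X n = (\<lambda>w. Sn X n w / Bn E X n)"

text \<open>Standing assumptions on a sequence (indices i >= 1).\<close>
definition standing ::
  "('w \<Rightarrow> real) set \<Rightarrow> (('w \<Rightarrow> real) \<Rightarrow> real) \<Rightarrow> real \<Rightarrow> (nat \<Rightarrow> 'w \<Rightarrow> real) \<Rightarrow> bool" where
  "standing H E \<beta> X \<longleftrightarrow>
     (\<forall>i\<ge>1. X i \<in> H \<and> (\<lambda>w. (X i w)^2) \<in> H) \<and>
     indep_seq E X \<and>
     (\<forall>i\<ge>1. E (X i) = 0 \<and> E (\<lambda>w. - X i w) = 0) \<and>
     (\<forall>i\<ge>1. sig_up E X i / sig_lo E X i = \<beta>) \<and>
     (\<exists>c>0. \<forall>i\<ge>1. c \<le> (sig_lo E X i)^2) \<and>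
     (\<exists>C. \<forall>i\<ge>1. (sig_up E X i)^2 \<le> C)"

section \<open>Viscosity solutions and G-normal distribution\<close>

definition test_fn ::
  "(real \<Rightarrow> real \<Rightarrow> real) \<Rightarrow> (real \<Rightarrow> real \<Rightarrow> real) \<Rightarrow> (real \<Rightarrow> real \<Rightarrow> real)
     \<Rightarrow> (real \<Rightarrow> real \<Rightarrow> real) \<Rightarrow> bool" where
  "test_fn \<phi> \<phi>t \<phi>x \<phi>xx \<longleftrightarrow>
     (\<forall>t>0. \<forall>x. ((\<lambda>s. \<phi> s x) has_real_derivative \<phi>t t x) (at t) \<and>
                ((\<lambda>y. \<phi> t y) has_real_derivative \<phi>x t x) (at x) \<and>
                ((\<lambda>y. \<phi>x t y) has_real_derivative \<phi>xx t x) (at x)) \<and>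
     continuous_on ({0<..} \<times> UNIV) (\<lambda>(t,x). \<phi> t x) \<and>
     continuous_on ({0<..} \<times> UNIV) (\<lambda>(t,x). \<phi>t t x) \<and>
     continuous_on ({0<..} \<times> UNIV) (\<lambda>(t,x). \<phi>x t x) \<and>
     continuous_on ({0<..} \<times> UNIV) (\<lambda>(t,x). \<phi>xx t x)"

definition visc_solution ::
  "(real \<Rightarrow> real) \<Rightarrow> (real \<Rightarrow> real) \<Rightarrow> (real \<Rightarrow> real \<Rightarrow> real) \<Rightarrow> bool" where
  "visc_solution G f u \<longleftrightarrow>
     continuous_on ({0..} \<times> UNIV) (\<lambda>(t,x). u t x) \<and>
     (\<forall>x. u 0 x = f x) \<and>
     (\<forall>t0 x0 \<phi> \<phi>t \<phi>x \<phi>xx. t0 > 0 \<longrightarrow> test_fn \<phi> \<phi>t \<phi>x \<phi>xx \<longrightarrow> \<phi> t0 x0 = u t0 x0 \<longrightarrow>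
        (\<exists>r>0. \<forall>t x. t > 0 \<longrightarrow> \<bar>t - t0\<bar> < r \<longrightarrow> \<bar>x - x0\<bar> < r \<longrightarrow> u t x \<le> \<phi> t x) \<longrightarrow>
        \<phi>t t0 x0 - G (\<phi>xx t0 x0) \<le> 0) \<and>
     (\<forall>t0 x0 \<phi> \<phi>t \<phi>x \<phi>xx. t0 > 0 \<longrightarrow> test_fn \<phi> \<phi>t \<phi>x \<phi>xx \<longrightarrow> \<phi> t0 x0 = u t0 x0 \<longrightarrow>
        (\<exists>r>0. \<forall>t x. t > 0 \<longrightarrow> \<bar>t - t0\<bar> < r \<longrightarrow> \<bar>x - x0\<bar> < r \<longrightarrow> u t x \<ge> \<phi> t x) \<longrightarrow>
        \<phi>t t0 x0 - G (\<phi>xx t0 x0) \<ge> 0)"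

definition G_of :: "(('v \<Rightarrow> real) \<Rightarrow> real) \<Rightarrow> ('v \<Rightarrow> real) \<Rightarrow> real \<Rightarrow> real" where
  "G_of E' \<xi> a = 1/2 * E' (\<lambda>w. a * (\<xi> w)^2)"

definition G_normal :: "('v \<Rightarrow> real) set \<Rightarrow> (('v \<Rightarrow> real) \<Rightarrow> real) \<Rightarrow> ('v \<Rightarrow> real) \<Rightarrow> bool" where
  "G_normal H' E' \<xi> \<longleftrightarrow>
     \<xi> \<in> H' \<and> (\<lambda>w. (\<xi> w)^2) \<in> H' \<and>
     (\<forall>f. cblip1 f \<longrightarrow>
        visc_solution (G_of E' \<xi>) f (\<lambda>t x. E' (\<lambda>w. f (x + sqrt t * \<xi> w))) \<and>
        (\<forall>v. visc_solution (G_of E' \<xi>) f v \<longrightarrow> (\<exists>B. \<forall>t\<ge>0. \<forall>x. \<bar>v t x\<bar> \<le> B) \<longrightarrow>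
             (\<forall>t\<ge>0. \<forall>x. v t x = E' (\<lambda>w. f (x + sqrt t * \<xi> w)))))"

definition calH :: "(('v \<Rightarrow> real) \<Rightarrow> real) \<Rightarrow> ('v \<Rightarrow> real) \<Rightarrow> (real \<Rightarrow> real) set" where
  "calH E' \<xi> = {f. cblip1 f \<and> E' (\<lambda>w. f (\<xi> w)) = - E' (\<lambda>w. - f (\<xi> w))}"

text \<open>alpha in (0,1) and C > 0 are such that Song's Berry--Esseen bound holds for every
  sequence in (Omega,H,E) satisfying the standing assumptions with ratio beta.\<close>
definition song_bound ::
  "('w \<Rightarrow> real) set \<Rightarrow> (('w \<Rightarrow> real) \<Rightarrow> real) \<Rightarrow> (('v \<Rightarrow> real) \<Rightarrow> real) \<Rightarrow> ('v \<Rightarrow> real)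
     \<Rightarrow> real \<Rightarrow> real \<Rightarrow> real \<Rightarrow> bool" where
  "song_bound H E E' \<xi> \<beta> \<alpha> C \<longleftrightarrow>
     (\<forall>Y. standing H E \<beta> Y \<longrightarrow> (\<forall>i\<ge>1. (\<lambda>w. \<bar>Y i w\<bar> powr (2 + \<alpha>)) \<in> H) \<longrightarrow>
        (\<forall>n\<ge>1. \<forall>f. cblip1 f \<longrightarrow> (\<forall>x y. \<bar>f x - f y\<bar> \<le> \<bar>x - y\<bar>) \<longrightarrow>
           \<bar>E (\<lambda>w. f (Wn E Y n w)) - E' (\<lambda>w. f (\<xi> w))\<bar> \<le>
             C * Max ((\<lambda>i. E (\<lambda>w. \<bar>Y i w\<bar> powr (2 + \<alpha>)) / sigm E Y i powr (2 + \<alpha>)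
                          * (sigm E Y i / Bn E Y n) powr \<alpha>) ` {1..n})))"

definition xi_k :: "(('w \<Rightarrow> real) \<Rightarrow> real) \<Rightarrow> (nat \<Rightarrow> 'w \<Rightarrow> real) \<Rightarrow> (real \<Rightarrow> real) \<Rightarrow> nat \<Rightarrow> 'w \<Rightarrow> real" where
  "xi_k E X f k = (\<lambda>w. f (Wn E X k w) - E (\<lambda>v. f (Wn E X k v)))"

definition Z_l :: "(('w \<Rightarrow> real) \<Rightarrow> real) \<Rightarrow> (nat \<Rightarrow> 'w \<Rightarrow> real) \<Rightarrow> (real \<Rightarrow> real) \<Rightarrow> nat \<Rightarrow> 'w \<Rightarrow> real" where
  "Z_l E X f l = (\<lambda>w. \<Sum>i\<in>{4^(l-1)..<4^l}. xi_k E X f i w / real i)"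

end

theory Submission
  imports Defs
begin

lemma nth_le_list_dist:
  assumes "k < length xs" "length ys = length xs"
  shows "\<bar>xs ! k - ys ! k\<bar> \<le> list_dist xs ys"
proof -
  have "(xs ! k - ys ! k)^2 \<le> (\<Sum>i<length xs. (xs ! i - ys ! i)^2)"
    using assms by (intro member_le_sum) auto
  then show ?thesis unfolding list_dist_def by (simp add: real_le_rsqrt)
qed

lemma list_dist_nonneg: "list_dist xs ys \<ge> 0"
  unfolding list_dist_def by (simp add: sum_nonneg)

definition bl2 :: "(real \<Rightarrow> real \<Rightarrow> real) \<Rightarrow> bool" where
  "bl2 \<phi> \<longleftrightarrow> (\<exists>B. \<forall>a b. \<bar>\<phi> a b\<bar> \<le> B) \<and>
     (\<exists>L. \<forall>a b a' b'. \<bar>\<phi> a b - \<phi> a' b'\<bar> \<le> L * (\<bar>a - a'\<bar> + \<bar>b - b'\<bar>))"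

locale sl =
  fixes M :: "'w measure" and H :: "('w \<Rightarrow> real) set" and E :: "('w \<Rightarrow> real) \<Rightarrow> real"
  assumes sls: "sublinear_space M H E"
begin

lemmas sl_all = sls[unfolded sublinear_space_def]

lemma add_H: "X \<in> H \<Longrightarrow> Y \<in> H \<Longrightarrow> (\<lambda>w. X w + Y w) \<in> H"
  using sl_all[THEN conjunct2, THEN conjunct2, THEN conjunct1] by blast
lemma mult_H: "X \<in> H \<Longrightarrow> (\<lambda>w. c * X w) \<in> H"
  using sl_all[THEN conjunct2, THEN conjunct2, THEN conjunct2, THEN conjunct1] by blast
lemma comp_H: "set Xs \<subseteq> H \<Longrightarrow> cblip (length Xs) \<phi> \<Longrightarrow> (\<lambda>w. \<phi> (map (\<lambda>X. X w) Xs)) \<in> H"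
  using sl_all[THEN conjunct2, THEN conjunct2, THEN conjunct2, THEN conjunct2, THEN conjunct1] by blast
lemma mono_E: "X \<in> H \<Longrightarrow> Y \<in> H \<Longrightarrow> (\<And>w. X w \<le> Y w) \<Longrightarrow> E X \<le> E Y"
  using sl_all[THEN conjunct2, THEN conjunct2, THEN conjunct2, THEN conjunct2, THEN conjunct2, THEN conjunct1] by blast
lemma const_E[simp]: "E (\<lambda>_. c) = c"
  using sl_all[THEN conjunct2, THEN conjunct2, THEN conjunct2, THEN conjunct2, THEN conjunct2, THEN conjunct2, THEN conjunct1] by blast
lemma sub_E: "X \<in> H \<Longrightarrow> Y \<in> H \<Longrightarrow> E (\<lambda>w. X w + Y w) \<le> E X + E Y"
  using sl_all[THEN conjunct2, THEN conjunct2, THEN conjunct2, THEN conjunct2, THEN conjunct2, THEN conjunct2, THEN conjunct2, THEN conjunct1] by blast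
lemma hom_E: "X \<in> H \<Longrightarrow> c \<ge> 0 \<Longrightarrow> E (\<lambda>w. c * X w) = c * E X"
  using sl_all[THEN conjunct2, THEN conjunct2, THEN conjunct2, THEN conjunct2, THEN conjunct2, THEN conjunct2, THEN conjunct2, THEN conjunct2, THEN conjunct1] by blast

lemma const_H: "(\<lambda>_. c) \<in> H"
proof -
  have "cblip (length ([]::('w\<Rightarrow>real) list)) (\<lambda>_. c)"
    unfolding cblip_def
  proof (intro conjI)
    show "\<exists>B. \<forall>xs::real list. length xs = length ([]::('w\<Rightarrow>real) list) \<longrightarrow> \<bar>c\<bar> \<le> B"
      by (rule exI[of _ "\<bar>c\<bar>"]) auto
    show "\<exists>L. \<forall>xs ys::real list. length xs = length ([]::('w\<Rightarrow>real) list) \<longrightarrow> length ys = length ([]::('w\<Rightarrow>real) list) \<longrightarrow> \<bar>c - c\<bar> \<le> L * list_dist xs ys"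
      by (rule exI[of _ 0]) auto
  qed
  from comp_H[OF _ this] show ?thesis by simp
qed

lemma bl2_H:
  assumes "bl2 \<phi>" "X \<in> H" "Y \<in> H"
  shows "(\<lambda>w. \<phi> (X w) (Y w)) \<in> H"
proof -
  obtain B L where B: "\<And>a b. \<bar>\<phi> a b\<bar> \<le> B" and L: "\<And>a b a' b'. \<bar>\<phi> a b - \<phi> a' b'\<bar> \<le> L * (\<bar>a - a'\<bar> + \<bar>b - b'\<bar>)"
    using assms(1) unfolding bl2_def by blast
  have L0: "L \<ge> 0" using L[of 0 0 1 0] by auto
  have "cblip (length [X, Y]) (\<lambda>xs. \<phi> (xs!0) (xs!1))"
    unfolding cblip_def
  proof (intro conjI exI allI impI)
    fix xs :: "real list" show "\<bar>\<phi> (xs!0) (xs!1)\<bar> \<le> B" by (rule B)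
  next
    fix xs ys :: "real list" assume l: "length xs = length [X,Y]" "length ys = length [X,Y]"
    have "\<bar>\<phi> (xs!0) (xs!1) - \<phi> (ys!0) (ys!1)\<bar> \<le> L * (\<bar>xs!0 - ys!0\<bar> + \<bar>xs!1 - ys!1\<bar>)" by (rule L)
    also have "\<dots> \<le> L * (list_dist xs ys + list_dist xs ys)"
      using l by (intro mult_left_mono add_mono nth_le_list_dist L0) auto
    finally show "\<bar>\<phi> (xs!0) (xs!1) - \<phi> (ys!0) (ys!1)\<bar> \<le> (2*L) * list_dist xs ys" by simp
  qed
  from comp_H[OF _ this] assms(2,3) show ?thesis by simp
qed

lemma cblip1_bl2: "cblip1 f \<Longrightarrow> bl2 (\<lambda>a b. f a)"
  unfolding cblip1_def bl2_def
proof (elim conjE exE, intro conjI exI allI)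
  fix B L a b a' b' assume B: "\<forall>x. \<bar>f x\<bar> \<le> B" and L: "\<forall>x y. \<bar>f x - f y\<bar> \<le> L * \<bar>x - y\<bar>"
  show "\<bar>f a\<bar> \<le> B" using B by auto
  have L0: "L \<ge> 0" using L[rule_format, of 1 0] by auto
  have "\<bar>f a - f a'\<bar> \<le> L * \<bar>a - a'\<bar>" using L by auto
  also have "\<dots> \<le> L * (\<bar>a - a'\<bar> + \<bar>b - b'\<bar>)" using L0 by (intro mult_left_mono) auto
  finally show "\<bar>f a - f a'\<bar> \<le> L * (\<bar>a - a'\<bar> + \<bar>b - b'\<bar>)" .
qed

lemma cblip1_H: "cblip1 f \<Longrightarrow> X \<in> H \<Longrightarrow> (\<lambda>w. f (X w)) \<in> H"
  using bl2_H[OF cblip1_bl2, of f X X] by simp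

lemma add_const_E: "X \<in> H \<Longrightarrow> E (\<lambda>w. X w + c) = E X + c"
proof -
  assume X: "X \<in> H"
  have 1: "E (\<lambda>w. X w + c) \<le> E X + c" using sub_E[OF X const_H, of c] by simp
  have "E X = E (\<lambda>w. (X w + c) + (-c))" by simp
  also have "\<dots> \<le> E (\<lambda>w. X w + c) + (-c)" using sub_E[OF add_H[OF X const_H] const_H, of c "-c"] by simp
  finally show ?thesis using 1 by simp
qed

lemma lip_E:
  assumes "X \<in> H" "Y \<in> H" "\<And>w. \<bar>X w - Y w\<bar> \<le> c"
  shows "\<bar>E X - E Y\<bar> \<le> c"
proof -
  have a: "X w \<le> Y w + c" "Y w \<le> X w + c" for w using assms(3)[of w] by (auto simp: abs_le_iff)
  have "E X \<le> E (\<lambda>w. Y w + c)" using assms a by (intro mono_E add_H const_H) auto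
  moreover have "E Y \<le> E (\<lambda>w. X w + c)" using assms a by (intro mono_E add_H const_H) auto
  ultimately show ?thesis using add_const_E assms(1,2) by (auto simp: abs_le_iff)
qed

lemma bound_E:
  assumes "X \<in> H" "\<And>w. \<bar>X w\<bar> \<le> c"
  shows "\<bar>E X\<bar> \<le> c"
  using lip_E[OF assms(1) const_H[of 0], of c] assms(2) by simp

lemma sum_H: "finite A \<Longrightarrow> (\<And>k. k \<in> A \<Longrightarrow> Y k \<in> H) \<Longrightarrow> (\<lambda>w. \<Sum>k\<in>A. Y k w) \<in> H"
proof (induction A rule: finite_induct)
  case empty then show ?case using const_H[of 0] by simp
next
  case (insert x F) then show ?case using add_H[of "Y x" "\<lambda>w. \<Sum>k\<in>F. Y k w"] by simp
qed

lemma sum_E: "finite A \<Longrightarrow> (\<And>k. k \<in> A \<Longrightarrow> Y k \<in> H) \<Longrightarrow> E (\<lambda>w. \<Sum>k\<in>A. Y k w) \<le> (\<Sum>k\<in>A. E (Y k))"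
proof (induction A rule: finite_induct)
  case empty then show ?case by simp
next
  case (insert x F)
  have "E (\<lambda>w. \<Sum>k\<in>insert x F. Y k w) = E (\<lambda>w. Y x w + (\<Sum>k\<in>F. Y k w))" using insert by simp
  also have "\<dots> \<le> E (Y x) + E (\<lambda>w. \<Sum>k\<in>F. Y k w)" using insert by (intro sub_E sum_H) auto
  also have "\<dots> \<le> E (Y x) + (\<Sum>k\<in>F. E (Y k))" using insert by auto
  finally show ?case using insert by simp
qed

lemma param_E:
  assumes "\<And>a. (\<lambda>v. \<Phi> a v) \<in> H" "\<And>a v. \<bar>\<Phi> a v\<bar> \<le> B"
    "\<And>a a' v. \<bar>\<Phi> a v - \<Phi> a' v\<bar> \<le> L * d a a'"
  shows "\<bar>E (\<Phi> a)\<bar> \<le> B" "\<bar>E (\<Phi> a) - E (\<Phi> a')\<bar> \<le> L * d a a'"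
proof -
  show "\<bar>E (\<Phi> a)\<bar> \<le> B" using bound_E[OF assms(1)[of a]] assms(2) by (metis)
  show "\<bar>E (\<Phi> a) - E (\<Phi> a')\<bar> \<le> L * d a a'" using lip_E[OF assms(1)[of a] assms(1)[of a']] assms(3) by metis
qed

end


lemma bl2_inner: "bl2 \<phi> \<Longrightarrow> bl2 (\<lambda>x y. \<phi> a (b + y))"
  unfolding bl2_def
proof (elim conjE exE, intro conjI exI allI)
  fix B L x y x' y' assume B: "\<forall>a b. \<bar>\<phi> a b\<bar> \<le> B" and L: "\<forall>a b a' b'. \<bar>\<phi> a b - \<phi> a' b'\<bar> \<le> L * (\<bar>a - a'\<bar> + \<bar>b - b'\<bar>)"
  show "\<bar>\<phi> a (b + y)\<bar> \<le> B" using B by auto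
  have L0: "L \<ge> 0" using L[rule_format, of 0 0 1 0] by auto
  have "\<bar>\<phi> a (b + y) - \<phi> a (b + y')\<bar> \<le> L * (\<bar>a - a\<bar> + \<bar>(b+y) - (b+y')\<bar>)" using L by blast
  also have "\<dots> \<le> L * (\<bar>x - x'\<bar> + \<bar>y - y'\<bar>)" using L0 by (intro mult_left_mono) auto
  finally show "\<bar>\<phi> a (b + y) - \<phi> a (b + y')\<bar> \<le> L * (\<bar>x - x'\<bar> + \<bar>y - y'\<bar>)" .
qed

lemma bl2_snd: "bl2 \<phi> \<Longrightarrow> bl2 (\<lambda>x y. \<phi> a y)"
  using bl2_inner[of \<phi> a 0] by simp

definition Phi :: "(real \<Rightarrow> real \<Rightarrow> real) \<Rightarrow> nat \<Rightarrow> real list \<Rightarrow> real" where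
  "Phi \<phi> i zs = \<phi> (\<Sum>k<i. zs!k) (\<Sum>k\<in>{i..<length zs}. zs!k)"

lemma Phi_cblip:
  assumes "bl2 \<phi>" "i \<le> n"
  shows "cblip n (Phi \<phi> i)"
proof -
  obtain B L where B: "\<And>a b. \<bar>\<phi> a b\<bar> \<le> B" and L: "\<And>a b a' b'. \<bar>\<phi> a b - \<phi> a' b'\<bar> \<le> L * (\<bar>a - a'\<bar> + \<bar>b - b'\<bar>)"
    using assms(1) unfolding bl2_def by blast
  have L0: "L \<ge> 0" using L[of 0 0 1 0] by auto
  show ?thesis unfolding cblip_def
  proof (intro conjI exI allI impI)
    fix xs :: "real list" show "\<bar>Phi \<phi> i xs\<bar> \<le> B" unfolding Phi_def by (rule B)
  next
    fix xs ys :: "real list" assume l: "length xs = n" "length ys = n"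
    have s1: "\<bar>(\<Sum>k<i. xs!k) - (\<Sum>k<i. ys!k)\<bar> \<le> (\<Sum>k<i. \<bar>xs!k - ys!k\<bar>)"
      by (simp add: sum_subtractf[symmetric] sum_abs)
    have s2: "\<bar>(\<Sum>k\<in>{i..<n}. xs!k) - (\<Sum>k\<in>{i..<n}. ys!k)\<bar> \<le> (\<Sum>k\<in>{i..<n}. \<bar>xs!k - ys!k\<bar>)"
      by (simp add: sum_subtractf[symmetric] sum_abs)
    have s3: "(\<Sum>k<i. \<bar>xs!k - ys!k\<bar>) + (\<Sum>k\<in>{i..<n}. \<bar>xs!k - ys!k\<bar>) = (\<Sum>k<n. \<bar>xs!k - ys!k\<bar>)"
      using assms(2) by (simp add: atLeast0LessThan[symmetric] sum.atLeastLessThan_concat)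
    have s4: "(\<Sum>k<n. \<bar>xs!k - ys!k\<bar>) \<le> (\<Sum>k<n. list_dist xs ys)"
      using l by (intro sum_mono nth_le_list_dist) auto
    have "\<bar>Phi \<phi> i xs - Phi \<phi> i ys\<bar> \<le> L * (\<bar>(\<Sum>k<i. xs!k) - (\<Sum>k<i. ys!k)\<bar> + \<bar>(\<Sum>k\<in>{i..<n}. xs!k) - (\<Sum>k\<in>{i..<n}. ys!k)\<bar>)"
      unfolding Phi_def using l L by simp
    also have "\<dots> \<le> L * (real n * list_dist xs ys)"
      using s1 s2 s3 s4 L0 by (intro mult_left_mono) auto
    finally show "\<bar>Phi \<phi> i xs - Phi \<phi> i ys\<bar> \<le> (L * real n) * list_dist xs ys" by simp
  qed
qed

lemma Sn_lt: "Sn X n w = (\<Sum>k<n. X (Suc k) w)"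
  unfolding Sn_def using sum.atLeast1_atMost_eq[of "\<lambda>k. X k w" n] by simp

lemma Sn_Suc: "Sn X (Suc n) w = Sn X n w + X (Suc n) w"
  unfolding Sn_lt by simp

lemma Phi_eq:
  assumes "i \<le> j"
  shows "Phi \<phi> i (map (\<lambda>X. X w) (map X [1..<j+1]) @ [y]) = \<phi> (Sn X i w) (Sn X j w - Sn X i w + y)"
proof -
  let ?zs = "map (\<lambda>X. X w) (map X [1..<j+1]) @ [y]"
  have nth: "k < j \<Longrightarrow> ?zs ! k = X (Suc k) w" for k by (simp add: nth_append del: upt_Suc)
  have len: "length ?zs = Suc j" by simp
  have a: "(\<Sum>k<i. ?zs!k) = Sn X i w" unfolding Sn_lt 
  proof (intro sum.cong refl)
    fix k assume "k \<in> {..<i}" then show "?zs ! k = X (Suc k) w" by (intro nth) (use assms in auto)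
  qed
  have "(\<Sum>k\<in>{i..<length ?zs}. ?zs!k) = (\<Sum>k\<in>{i..<j}. ?zs!k) + ?zs!j"
    using assms len by simp
  also have "\<dots> = (\<Sum>k\<in>{i..<j}. X (Suc k) w) + y"
  proof -
    have "?zs ! j = y" by (simp add: nth_append del: upt_Suc)
    moreover have "(\<Sum>k\<in>{i..<j}. ?zs!k) = (\<Sum>k\<in>{i..<j}. X (Suc k) w)"
    proof (intro sum.cong refl)
      fix k assume "k \<in> {i..<j}" then show "?zs ! k = X (Suc k) w" by (intro nth) auto
    qed
    ultimately show ?thesis by (simp only:)
  qed
  also have "(\<Sum>k\<in>{i..<j}. X (Suc k) w) = Sn X j w - Sn X i w"
    unfolding Sn_lt using sum.atLeastLessThan_concat[of 0 i j "\<lambda>k. X (Suc k) w"] assms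
    by (simp add: atLeast0LessThan)
  finally show ?thesis unfolding Phi_def using a by simp
qed

locale sli = sl +
  fixes X :: "nat \<Rightarrow> 'w \<Rightarrow> real"
  assumes ind: "indep_seq E X" and X_H: "\<And>i. i \<ge> 1 \<Longrightarrow> X i \<in> H"
begin

lemma Sn_H: "(\<lambda>w. Sn X n w) \<in> H"
  unfolding Sn_def by (intro sum_H) (auto intro: X_H)

lemma Sn_H': "Sn X n \<in> H"
  using Sn_H by (simp add: fun_eq_iff)

lemma indep_step:
  assumes "bl2 \<phi>" "1 \<le> i" "i \<le> j"
  shows "E (\<lambda>w. \<phi> (Sn X i w) (Sn X j w - Sn X i w + X (j+1) w)) =
         E (\<lambda>w. E (\<lambda>u. \<phi> (Sn X i w) (Sn X j w - Sn X i w + X (j+1) u)))"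
proof -
  have "indep_of E [X (j+1)] (map X [1..<j+1])" using ind assms unfolding indep_seq_def by auto
  then have "cblip (length (map X [1..<j+1]) + length [X (j+1)]) (Phi \<phi> i) \<longrightarrow>
     E (\<lambda>w. Phi \<phi> i (map (\<lambda>X. X w) (map X [1..<j+1]) @ map (\<lambda>Y. Y w) [X (j+1)])) =
     E (\<lambda>w. E (\<lambda>v. Phi \<phi> i (map (\<lambda>X. X w) (map X [1..<j+1]) @ map (\<lambda>Y. Y v) [X (j+1)])))"
    unfolding indep_of_def by blast
  moreover have "cblip (length (map X [1..<j+1]) + length [X (j+1)]) (Phi \<phi> i)"
    using assms by (intro Phi_cblip) auto
  ultimately show ?thesis by (simp only: list.map Phi_eq[OF assms(3)])
qed

lemma indep_block:
  assumes "1 \<le> i" "i \<le> j"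
  shows "\<forall>\<phi>. bl2 \<phi> \<longrightarrow> E (\<lambda>w. \<phi> (Sn X i w) (Sn X j w - Sn X i w)) =
            E (\<lambda>w. E (\<lambda>v. \<phi> (Sn X i w) (Sn X j v - Sn X i v)))"
  using assms(2)
proof (induction j rule: dec_induct)
  case base
  show ?case by simp
next
  case (step n)
  show ?case
  proof (intro allI impI)
    fix \<phi> assume bl: "bl2 \<phi>"
    define \<psi> where "\<psi> a b = E (\<lambda>u. \<phi> a (b + X (n+1) u))" for a b
    obtain B L where B: "\<And>a b. \<bar>\<phi> a b\<bar> \<le> B" and L: "\<And>a b a' b'. \<bar>\<phi> a b - \<phi> a' b'\<bar> \<le> L * (\<bar>a - a'\<bar> + \<bar>b - b'\<bar>)"
      using bl unfolding bl2_def by blast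
    have memb: "(\<lambda>u. \<phi> a (b + X (n+1) u)) \<in> H" for a b
      using bl2_H[OF bl2_inner[OF bl, of a b] X_H X_H, of "n+1" "n+1"] by simp
    have "bl2 \<psi>" unfolding bl2_def
    proof (intro conjI exI allI)
      fix a b show "\<bar>\<psi> a b\<bar> \<le> B" unfolding \<psi>_def using bound_E[OF memb] B by blast
    next
      fix a b a' b'
      have "\<bar>(\<phi> a (b + X (n+1) u)) - (\<phi> a' (b' + X (n+1) u))\<bar> \<le> L * (\<bar>a - a'\<bar> + \<bar>b - b'\<bar>)" for u
        using L[of a "b + X (n+1) u" a' "b' + X (n+1) u"] by simp
      then show "\<bar>\<psi> a b - \<psi> a' b'\<bar> \<le> L * (\<bar>a - a'\<bar> + \<bar>b - b'\<bar>)"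
        unfolding \<psi>_def by (intro lip_E memb) auto
    qed
    have i1: "1 \<le> i" by fact
    have "E (\<lambda>w. \<phi> (Sn X i w) (Sn X (Suc n) w - Sn X i w)) =
          E (\<lambda>w. \<phi> (Sn X i w) (Sn X n w - Sn X i w + X (n+1) w))"
      by (simp add: Sn_Suc algebra_simps)
    also have "\<dots> = E (\<lambda>w. E (\<lambda>u. \<phi> (Sn X i w) (Sn X n w - Sn X i w + X (n+1) u)))"
      using indep_step[OF bl i1 step(1)] .
    also have "\<dots> = E (\<lambda>w. \<psi> (Sn X i w) (Sn X n w - Sn X i w))" unfolding \<psi>_def by simp
    also have "\<dots> = E (\<lambda>w. E (\<lambda>v. \<psi> (Sn X i w) (Sn X n v - Sn X i v)))"
      using step(3) \<open>bl2 \<psi>\<close> by blast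
    also have "\<dots> = E (\<lambda>w. E (\<lambda>v. \<phi> (Sn X i w) (Sn X n v - Sn X i v + X (n+1) v)))"
    proof -
      have "E (\<lambda>v. \<psi> a (Sn X n v - Sn X i v)) = E (\<lambda>v. \<phi> a (Sn X n v - Sn X i v + X (n+1) v))" for a
        using indep_step[OF bl2_snd[OF bl, of a] i1 step(1)] unfolding \<psi>_def by simp
      then show ?thesis by simp
    qed
    also have "\<dots> = E (\<lambda>w. E (\<lambda>v. \<phi> (Sn X i w) (Sn X (Suc n) v - Sn X i v)))"
      by (simp add: Sn_Suc algebra_simps)
    finally show "E (\<lambda>w. \<phi> (Sn X i w) (Sn X (Suc n) w - Sn X i w)) =
        E (\<lambda>w. E (\<lambda>v. \<phi> (Sn X i w) (Sn X (Suc n) v - Sn X i v)))" .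
  qed
qed

end


lemma bl2_prod:
  fixes u v :: "real \<Rightarrow> real"
  assumes "\<And>x. \<bar>u x\<bar> \<le> Bd" "\<And>x. \<bar>v x\<bar> \<le> Bd"
    "\<And>x y. \<bar>u x - u y\<bar> \<le> Lu * \<bar>x - y\<bar>" "\<And>x y. \<bar>v x - v y\<bar> \<le> Lv * \<bar>x - y\<bar>"
  shows "bl2 (\<lambda>a b. u a * v b)"
  unfolding bl2_def
proof (intro conjI exI allI)
  have Bd: "Bd \<ge> 0" using assms(1)[of 0] by auto
  have Lu: "Lu \<ge> 0" using assms(3)[of 1 0] by auto
  have Lv: "Lv \<ge> 0" using assms(4)[of 1 0] by auto
  fix a b show "\<bar>u a * v b\<bar> \<le> Bd * Bd"
    unfolding abs_mult using assms(1,2) Bd by (intro mult_mono) auto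
  fix a' b'
  have "\<bar>u a * v b - u a' * v b'\<bar> = \<bar>u a * (v b - v b') + v b' * (u a - u a')\<bar>"
    by (simp add: algebra_simps)
  also have "\<dots> \<le> \<bar>u a\<bar> * \<bar>v b - v b'\<bar> + \<bar>v b'\<bar> * \<bar>u a - u a'\<bar>"
    by (metis abs_mult abs_triangle_ineq)
  also have "\<dots> \<le> Bd * (Lv * \<bar>b - b'\<bar>) + Bd * (Lu * \<bar>a - a'\<bar>)"
    using assms Bd by (intro add_mono mult_mono) auto
  also have "\<dots> \<le> (Bd * (Lu + Lv)) * (\<bar>a - a'\<bar> + \<bar>b - b'\<bar>)"
    using Bd Lu Lv by (simp add: algebra_simps mult_nonneg_nonneg add_nonneg_nonneg)
  finally show "\<bar>u a * v b - u a' * v b'\<bar> \<le> (Bd * (Lu + Lv)) * (\<bar>a - a'\<bar> + \<bar>b - b'\<bar>)" .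
qed

locale lm = sli M H E X + E': sl M' H' E'
  for M :: "'w measure" and H E X and M' :: "'v measure" and H' E' +
  fixes \<xi> :: "'v \<Rightarrow> real" and \<beta> \<alpha> C c0 C0 K B L :: real and f :: "real \<Rightarrow> real"
  assumes c0: "c0 > 0" and lo: "\<And>i. i \<ge> 1 \<Longrightarrow> c0 \<le> (sig_lo E X i)^2"
    and up: "\<And>i. i \<ge> 1 \<Longrightarrow> (sig_up E X i)^2 \<le> C0"
    and ratio: "\<And>i. i \<ge> 1 \<Longrightarrow> sig_up E X i / sig_lo E X i = \<beta>" and beta: "\<beta> \<ge> 1"
    and Xsq: "\<And>i. i \<ge> 1 \<Longrightarrow> (\<lambda>w. (X i w)^2) \<in> H"
    and K0: "K \<ge> 0" and Kb: "\<And>i. i \<ge> 1 \<Longrightarrow> E (\<lambda>w. \<bar>X i w\<bar> powr (2 + \<alpha>)) \<le> K"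
    and alpha: "\<alpha> > 0" and C0: "C > 0"
    and songb: "\<And>n g. n \<ge> 1 \<Longrightarrow> cblip1 g \<Longrightarrow> (\<forall>x y. \<bar>g x - g y\<bar> \<le> \<bar>x - y\<bar>) \<Longrightarrow>
           \<bar>E (\<lambda>w. g (Wn E X n w)) - E' (\<lambda>w. g (\<xi> w))\<bar> \<le>
             C * Max ((\<lambda>i. E (\<lambda>w. \<bar>X i w\<bar> powr (2 + \<alpha>)) / sigm E X i powr (2 + \<alpha>)
                          * (sigm E X i / Bn E X n) powr \<alpha>) ` {1..n})"
    and xiH: "\<xi> \<in> H'" and xi2H: "(\<lambda>w. (\<xi> w)^2) \<in> H'"
    and fB: "\<And>x. \<bar>f x\<bar> \<le> B" and fL: "\<And>x y. \<bar>f x - f y\<bar> \<le> L * \<bar>x - y\<bar>"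
    and Bpos: "B > 0" and Lpos: "L > 0"
    and fc: "E' (\<lambda>w. f (\<xi> w)) = - E' (\<lambda>w. - f (\<xi> w))"
begin

lemma sig_bounds:
  assumes "i \<ge> 1"
  shows "sqrt c0 \<le> sigm E X i" "sigm E X i \<le> sqrt C0"
proof -
  have m: "(\<lambda>w. -((X i w)^2)) \<in> H" using mult_H[OF Xsq[OF assms], of "-1"] by simp
  have "E (\<lambda>w. -((X i w)^2)) \<le> E (\<lambda>_. 0)" by (intro mono_E m const_H) auto
  then have q: "- E (\<lambda>w. -((X i w)^2)) \<ge> 0" by simp
  define lo where "lo = sig_lo E X i"
  define upp where "upp = sig_up E X i"
  have lo0: "lo \<ge> 0" unfolding lo_def sig_lo_def using q by simp
  have "sqrt c0 \<le> sqrt (lo^2)" by (intro real_sqrt_le_mono) (use lo[OF assms] in \<open>simp add: lo_def\<close>)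
  then have lo1: "sqrt c0 \<le> lo" using lo0 by simp
  have lop: "lo > 0" using lo1 c0 by (smt (verit) real_sqrt_gt_zero)
  have "upp = \<beta> * lo" using ratio[OF assms] lop unfolding lo_def upp_def by (simp add: field_simps)
  then have ul: "lo \<le> upp" using beta lop by (simp add: mult_le_cancel_right1)
  have "upp \<le> sqrt C0" using up[OF assms] unfolding upp_def by (intro real_le_rsqrt)
  then show "sqrt c0 \<le> sigm E X i" "sigm E X i \<le> sqrt C0"
    using lo1 ul unfolding sigm_def lo_def[symmetric] upp_def[symmetric] by auto
qed

lemma C0pos: "C0 > 0"
proof -
  have "sqrt c0 \<le> sigm E X 1" "sigm E X 1 \<le> sqrt C0" using sig_bounds[of 1] by auto
  then have "sqrt c0 \<le> sqrt C0" by linarith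
  then have "c0 \<le> C0" by (simp only: real_sqrt_le_iff)
  then show ?thesis using c0 by simp
qed

lemma Bn_bounds:
  assumes "n \<ge> 1"
  shows "sqrt (n * c0) \<le> Bn E X n" "Bn E X n \<le> sqrt (n * C0)" "Bn E X n > 0"
proof -
  have a: "c0 \<le> (sigm E X i)^2" "(sigm E X i)^2 \<le> C0" if "i \<in> {1..n}" for i
  proof -
    have i: "i \<ge> 1" using that by auto
    have "(sqrt c0)^2 \<le> (sigm E X i)^2" using sig_bounds[OF i] c0 by (intro power_mono) auto
    then show "c0 \<le> (sigm E X i)^2" using c0 by simp
    have s0: "0 \<le> sigm E X i" using sig_bounds(1)[OF i] c0 real_sqrt_ge_zero[of c0] by linarith
    have "(sigm E X i)^2 \<le> (sqrt C0)^2" using sig_bounds[OF i] s0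
      by (intro power_mono) auto
    then show "(sigm E X i)^2 \<le> C0" using C0pos by simp
  qed
  have "(\<Sum>i=1..n. c0) \<le> (\<Sum>i=1..n. (sigm E X i)^2)" using a by (intro sum_mono) auto
  then have l: "n * c0 \<le> (\<Sum>i=1..n. (sigm E X i)^2)" by simp
  have "(\<Sum>i=1..n. (sigm E X i)^2) \<le> (\<Sum>i=1..n. C0)" using a by (intro sum_mono) auto
  then have u: "(\<Sum>i=1..n. (sigm E X i)^2) \<le> n * C0" by simp
  show "sqrt (n * c0) \<le> Bn E X n" unfolding Bn_def using l by (simp add: real_sqrt_le_iff)
  show "Bn E X n \<le> sqrt (n * C0)" unfolding Bn_def using u by (simp add: real_sqrt_le_iff)
  have "n * c0 > 0" using assms c0 by simp
  then show "Bn E X n > 0" unfolding Bn_def using l by (smt (verit) real_sqrt_gt_zero)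
qed

definition D where "D = C * K / (sqrt c0) powr (2 + \<alpha>) * (sqrt C0 / sqrt c0) powr \<alpha>"
definition e :: "nat \<Rightarrow> real" where "e n = (1 / sqrt n) powr \<alpha>"

lemma D_nonneg: "D \<ge> 0" unfolding D_def using C0 K0 by simp

lemma e_bounds: "n \<ge> 1 \<Longrightarrow> e n \<ge> 0 \<and> e n \<le> 1"
proof -
  assume n: "n \<ge> 1"
  have "(1 / sqrt n) powr \<alpha> \<le> 1 powr \<alpha>" using alpha n by (intro powr_mono2) auto
  then show ?thesis unfolding e_def by simp
qed

lemma err_bound:
  assumes n: "n \<ge> 1"
  shows "C * Max ((\<lambda>i. E (\<lambda>w. \<bar>X i w\<bar> powr (2 + \<alpha>)) / sigm E X i powr (2 + \<alpha>)
                          * (sigm E X i / Bn E X n) powr \<alpha>) ` {1..n}) \<le> D * e n"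
proof -
  define b where "b = K / (sqrt c0) powr (2 + \<alpha>) * (sqrt C0 / sqrt (n * c0)) powr \<alpha>"
  have sc0: "sqrt c0 > 0" using c0 by simp
  have "Max ((\<lambda>i. E (\<lambda>w. \<bar>X i w\<bar> powr (2 + \<alpha>)) / sigm E X i powr (2 + \<alpha>)
                          * (sigm E X i / Bn E X n) powr \<alpha>) ` {1..n}) \<le> b"
  proof (rule Max.boundedI)
    show "finite ((\<lambda>i. E (\<lambda>w. \<bar>X i w\<bar> powr (2 + \<alpha>)) / sigm E X i powr (2 + \<alpha>)
                          * (sigm E X i / Bn E X n) powr \<alpha>) ` {1..n})" by simp
    show "(\<lambda>i. E (\<lambda>w. \<bar>X i w\<bar> powr (2 + \<alpha>)) / sigm E X i powr (2 + \<alpha>)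
                          * (sigm E X i / Bn E X n) powr \<alpha>) ` {1..n} \<noteq> {}" using n by simp
    fix y assume "y \<in> (\<lambda>i. E (\<lambda>w. \<bar>X i w\<bar> powr (2 + \<alpha>)) / sigm E X i powr (2 + \<alpha>)
                          * (sigm E X i / Bn E X n) powr \<alpha>) ` {1..n}"
    then obtain i where i: "i \<in> {1..n}" and y: "y = E (\<lambda>w. \<bar>X i w\<bar> powr (2 + \<alpha>)) / sigm E X i powr (2 + \<alpha>)
                          * (sigm E X i / Bn E X n) powr \<alpha>" by auto
    have i1: "i \<ge> 1" using i by auto
    have sg: "sqrt c0 \<le> sigm E X i" "sigm E X i \<le> sqrt C0" using sig_bounds[OF i1] by auto
    have dpos: "(sqrt c0) powr (2 + \<alpha>) > 0" using sc0 by simp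
    have d: "(sqrt c0) powr (2 + \<alpha>) \<le> sigm E X i powr (2 + \<alpha>)"
      using sg sc0 alpha by (intro powr_mono2) auto
    have f1: "E (\<lambda>w. \<bar>X i w\<bar> powr (2 + \<alpha>)) / sigm E X i powr (2 + \<alpha>) \<le> K / (sqrt c0) powr (2 + \<alpha>)"
    proof -
      have "E (\<lambda>w. \<bar>X i w\<bar> powr (2 + \<alpha>)) / sigm E X i powr (2 + \<alpha>) \<le> K / sigm E X i powr (2 + \<alpha>)"
        using Kb[OF i1] dpos d by (intro divide_right_mono) auto
      also have "\<dots> \<le> K / (sqrt c0) powr (2 + \<alpha>)"
        using K0 dpos d by (intro divide_left_mono mult_pos_pos) auto
      finally show ?thesis .
    qed
    have Bn: "sqrt (n * c0) \<le> Bn E X n" "Bn E X n > 0" using Bn_bounds[OF n] by auto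
    have snc: "sqrt (n * c0) > 0" using n c0 by simp
    have f2: "(sigm E X i / Bn E X n) powr \<alpha> \<le> (sqrt C0 / sqrt (n * c0)) powr \<alpha>"
    proof (rule powr_mono2)
      show "0 \<le> \<alpha>" using alpha by simp
      show "0 \<le> sigm E X i / Bn E X n" using sg sc0 Bn by (intro divide_nonneg_pos) linarith+
      show "sigm E X i / Bn E X n \<le> sqrt C0 / sqrt (n * c0)"
        using sg sc0 Bn snc C0pos by (intro frac_le) auto
    qed
    show "y \<le> b" unfolding y b_def
      using f1 f2 K0 dpos by (intro mult_mono) auto
  qed
  then have "C * Max ((\<lambda>i. E (\<lambda>w. \<bar>X i w\<bar> powr (2 + \<alpha>)) / sigm E X i powr (2 + \<alpha>)
                          * (sigm E X i / Bn E X n) powr \<alpha>) ` {1..n}) \<le> C * b"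
    using C0 by (intro mult_left_mono) auto
  also have "C * b = D * e n"
  proof -
    have "sqrt C0 / sqrt (n * c0) = (sqrt C0 / sqrt c0) * (1 / sqrt n)"
      by (simp add: real_sqrt_mult)
    then have "(sqrt C0 / sqrt (n * c0)) powr \<alpha> = ((sqrt C0 / sqrt c0) * (1 / sqrt n)) powr \<alpha>"
      by (simp only:)
    also have "\<dots> = (sqrt C0 / sqrt c0) powr \<alpha> * (1 / sqrt n) powr \<alpha>"
      by (rule powr_mult)
    finally have "(sqrt C0 / sqrt (n * c0)) powr \<alpha> = (sqrt C0 / sqrt c0) powr \<alpha> * (1 / sqrt n) powr \<alpha>" .
    then show ?thesis unfolding b_def D_def e_def by simp
  qed
  finally show ?thesis .
qed

lemma songE:
  assumes "n \<ge> 1" "cblip1 g" "\<And>x y. \<bar>g x - g y\<bar> \<le> \<bar>x - y\<bar>"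
  shows "\<bar>E (\<lambda>w. g (Wn E X n w)) - E' (\<lambda>w. g (\<xi> w))\<bar> \<le> D * e n"
  using songb[OF assms(1,2)] assms(3) err_bound[OF assms(1)] by force

lemma W_H: "Wn E X n \<in> H"
proof -
  have "(\<lambda>w. (1 / Bn E X n) * Sn X n w) \<in> H" by (intro mult_H Sn_H')
  then show ?thesis unfolding Wn_def by simp
qed

end

context lm
begin

lemma fW_H: "cblip1 g \<Longrightarrow> (\<lambda>w. g (Wn E X n w)) \<in> H"
  by (rule cblip1_H[OF _ W_H])

lemma f_cblip: "cblip1 f"
  unfolding cblip1_def by (intro conjI exI[of _ B] exI[of _ L] allI fB fL)

lemma cblip1_affine: "cblip1 (\<lambda>x. p * f x + q)"
  unfolding cblip1_def
proof (intro conjI exI allI)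
  fix x show "\<bar>p * f x + q\<bar> \<le> \<bar>p\<bar> * B + \<bar>q\<bar>"
  proof -
    have "\<bar>p * f x\<bar> \<le> \<bar>p\<bar> * B" unfolding abs_mult using fB[of x] by (intro mult_left_mono) auto
    then show ?thesis by arith
  qed
next
  fix x y
  have "(p * f x + q) - (p * f y + q) = p * (f x - f y)" by (simp add: algebra_simps)
  then have "\<bar>(p * f x + q) - (p * f y + q)\<bar> = \<bar>p\<bar> * \<bar>f x - f y\<bar>" by (simp only: abs_mult)
  also have "\<dots> \<le> \<bar>p\<bar> * (L * \<bar>x - y\<bar>)" using fL by (intro mult_left_mono) auto
  finally show "\<bar>(p * f x + q) - (p * f y + q)\<bar> \<le> (\<bar>p\<bar> * L) * \<bar>x - y\<bar>" by simp
qed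

lemma abs_le_sq1: "\<bar>t::real\<bar> \<le> t^2 + 1"
proof (cases "\<bar>t\<bar> \<le> 1")
  case True then show ?thesis using zero_le_power2[of t] by linarith
next
  case False
  then have "\<bar>t\<bar> * 1 \<le> \<bar>t\<bar> * \<bar>t\<bar>" by (intro mult_left_mono) auto
  also have "\<bar>t\<bar> * \<bar>t\<bar> = t^2" by (simp add: power2_eq_square)
  finally show ?thesis by simp
qed

lemma s2_nonneg: "E' (\<lambda>w. (\<xi> w)^2) \<ge> 0"
  using E'.mono_E[OF E'.const_H[of 0] xi2H] by simp

lemma xi_bound: "E' (\<lambda>w. min R \<bar>\<xi> w\<bar>) \<le> 1 + E' (\<lambda>w. (\<xi> w)^2)" if R: "R > 0"
proof -
  have c: "cblip1 (\<lambda>x. min R \<bar>x\<bar>)" unfolding cblip1_def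
  proof (intro conjI exI allI)
    fix x show "\<bar>min R \<bar>x\<bar>\<bar> \<le> R" using R by auto
  next
    fix x y :: real
    have m: "\<bar>min R a - min R b\<bar> \<le> \<bar>a - b\<bar>" for a b :: real by arith
    have "\<bar>\<bar>x\<bar> - \<bar>y\<bar>\<bar> \<le> \<bar>x - y\<bar>" by (rule abs_triangle_ineq3)
    then show "\<bar>min R \<bar>x\<bar> - min R \<bar>y\<bar>\<bar> \<le> 1 * \<bar>x - y\<bar>" using m[of "\<bar>x\<bar>" "\<bar>y\<bar>"] by linarith
  qed
  have "E' (\<lambda>w. min R \<bar>\<xi> w\<bar>) \<le> E' (\<lambda>w. (\<xi> w)^2 + 1)"
  proof (rule E'.mono_E)
    show "(\<lambda>w. min R \<bar>\<xi> w\<bar>) \<in> H'" using E'.cblip1_H[OF c xiH] .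
    show "(\<lambda>w. (\<xi> w)^2 + 1) \<in> H'" by (intro E'.add_H xi2H E'.const_H)
    fix w
    have "\<bar>\<xi> w\<bar> \<le> (\<xi> w)^2 + 1" by (rule abs_le_sq1)
    then show "min R \<bar>\<xi> w\<bar> \<le> (\<xi> w)^2 + 1" by linarith
  qed
  also have "\<dots> = E' (\<lambda>w. (\<xi> w)^2) + 1" using E'.add_const_E[OF xi2H] .
  finally show ?thesis by simp
qed

lemma mean_cert:
  assumes j: "j \<ge> 1"
  shows "E (\<lambda>w. f (Wn E X j w)) + E (\<lambda>w. - f (Wn E X j w)) \<le> 2 * L * D * e j"
proof -
  have fxH: "(\<lambda>w. f (\<xi> w)) \<in> H'" "(\<lambda>w. - f (\<xi> w)) \<in> H'"
    using E'.cblip1_H[OF cblip1_affine[of 1 0] xiH] E'.cblip1_H[OF cblip1_affine[of "-1" 0] xiH] by auto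
  have fwH: "(\<lambda>w. f (Wn E X j w)) \<in> H" "(\<lambda>w. - f (Wn E X j w)) \<in> H"
    using fW_H[OF cblip1_affine[of 1 0]] fW_H[OF cblip1_affine[of "-1" 0]] by auto
  have l1: "\<bar>(1/L) * f x - (1/L) * f y\<bar> \<le> \<bar>x - y\<bar>" for x y
  proof -
    have "(1/L) * f x - (1/L) * f y = (1/L) * (f x - f y)" by (simp add: algebra_simps)
    then have "\<bar>(1/L) * f x - (1/L) * f y\<bar> = \<bar>1/L\<bar> * \<bar>f x - f y\<bar>" by (simp only: abs_mult)
    also have "\<bar>1/L\<bar> = 1/L" using Lpos by simp
    finally have "\<bar>(1/L) * f x - (1/L) * f y\<bar> = (1/L) * \<bar>f x - f y\<bar>" .
    also have "\<dots> \<le> (1/L) * (L * \<bar>x - y\<bar>)" using fL Lpos by (intro mult_left_mono) auto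
    finally show ?thesis using Lpos by simp
  qed
  have l2: "\<bar>(1/L) * - f x - (1/L) * - f y\<bar> \<le> \<bar>x - y\<bar>" for x y using l1[of x y] by (simp add: abs_minus_commute algebra_simps)
  have c1: "cblip1 (\<lambda>x. (1/L) * f x)" using cblip1_affine[of "1/L" 0] by simp
  have c2: "cblip1 (\<lambda>x. (1/L) * - f x)" using cblip1_affine[of "-(1/L)" 0] by simp
  have s1: "\<bar>E (\<lambda>w. (1/L) * f (Wn E X j w)) - E' (\<lambda>w. (1/L) * f (\<xi> w))\<bar> \<le> D * e j"
    using songE[OF j c1 l1] .
  have s2: "\<bar>E (\<lambda>w. (1/L) * - f (Wn E X j w)) - E' (\<lambda>w. (1/L) * - f (\<xi> w))\<bar> \<le> D * e j"
    using songE[OF j c2 l2] .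
  have L0: "1/L \<ge> 0" using Lpos by simp
  have h1: "E (\<lambda>w. (1/L) * f (Wn E X j w)) = (1/L) * E (\<lambda>w. f (Wn E X j w))"
    by (rule hom_E[OF fwH(1) L0])
  have h2: "E (\<lambda>w. (1/L) * - f (Wn E X j w)) = (1/L) * E (\<lambda>w. - f (Wn E X j w))"
    by (rule hom_E[OF fwH(2) L0])
  have h3: "E' (\<lambda>w. (1/L) * f (\<xi> w)) = (1/L) * E' (\<lambda>w. f (\<xi> w))"
    by (rule E'.hom_E[OF fxH(1) L0])
  have h4: "E' (\<lambda>w. (1/L) * - f (\<xi> w)) = (1/L) * E' (\<lambda>w. - f (\<xi> w))"
    by (rule E'.hom_E[OF fxH(2) L0])
  have a1: "(1/L) * E (\<lambda>w. f (Wn E X j w)) - (1/L) * E' (\<lambda>w. f (\<xi> w)) \<le> D * e j"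
    using s1 unfolding h1 h3 by linarith
  have a2: "(1/L) * E (\<lambda>w. - f (Wn E X j w)) + (1/L) * E' (\<lambda>w. f (\<xi> w)) \<le> D * e j"
    using s2 unfolding h2 h4 fc by linarith
  have "(1/L) * (E (\<lambda>w. f (Wn E X j w)) + E (\<lambda>w. - f (Wn E X j w))) \<le> 2 * D * e j"
    unfolding distrib_left using a1 a2 by linarith
  then have "L * ((1/L) * (E (\<lambda>w. f (Wn E X j w)) + E (\<lambda>w. - f (Wn E X j w)))) \<le> L * (2 * D * e j)"
    using Lpos by (intro mult_left_mono) auto
  then show ?thesis using Lpos by (simp add: mult.assoc)
qed

end

context lm
begin

lemma W_eq: "Wn E X k w = Sn X k w / Bn E X k"
  by (simp add: Wn_def)

lemma pair_bound:
  assumes i1: "1 \<le> i" and ij: "i < j"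
  shows "E (\<lambda>w. xi_k E X f i w * xi_k E X f j w)
     \<le> 4 * B * L * (Bn E X i / Bn E X j) * (1 + E' (\<lambda>w. (\<xi> w)^2) + D) + 4 * B * L * D * e j"
proof -
  have j1: "1 \<le> j" using i1 ij by simp
  define Bi where "Bi = Bn E X i"
  define Bj where "Bj = Bn E X j"
  have Bi: "Bi > 0" unfolding Bi_def using Bn_bounds(3)[OF i1] .
  have Bj: "Bj > 0" unfolding Bj_def using Bn_bounds(3)[OF j1] .
  define ci where "ci = E (\<lambda>v. f (Wn E X i v))"
  define cj where "cj = E (\<lambda>v. f (Wn E X j v))"
  have fwi: "(\<lambda>v. f (Wn E X i v)) \<in> H" using fW_H[OF f_cblip] .
  have fwj: "(\<lambda>v. f (Wn E X j v)) \<in> H" using fW_H[OF f_cblip] .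
  have mfwj: "(\<lambda>v. - f (Wn E X j v)) \<in> H" using fW_H[OF cblip1_affine[of "-1" 0]] by simp
  have ci_b: "\<bar>ci\<bar> \<le> B" unfolding ci_def by (rule bound_E[OF fwi fB])
  have cj_b: "\<bar>cj\<bar> \<le> B" unfolding cj_def by (rule bound_E[OF fwj fB])
  define V where "V w = Sn X j w - Sn X i w" for w
  have VH: "V \<in> H"
  proof -
    have "(\<lambda>w. Sn X j w + (-1) * Sn X i w) \<in> H" by (intro add_H mult_H Sn_H')
    then show ?thesis unfolding V_def by simp
  qed
  define T where "T w = V w / Bj" for w
  have TH: "T \<in> H"
  proof -
    have "(\<lambda>w. (1/Bj) * V w) \<in> H" by (intro mult_H VH)
    then show ?thesis unfolding T_def by simp
  qed
  have fT: "(\<lambda>v. f (T v)) \<in> H" using cblip1_H[OF f_cblip TH] .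
  have mfT: "(\<lambda>v. - f (T v)) \<in> H" using cblip1_H[OF cblip1_affine[of "-1" 0] TH] by simp
  define g where "g s = min (2*B) (L * \<bar>s\<bar> / Bj)" for s
  have g_cb: "cblip1 g" unfolding cblip1_def
  proof (intro conjI exI allI)
    fix x show "\<bar>g x\<bar> \<le> 2 * B" unfolding g_def using Bpos Lpos Bj by (simp add: abs_le_iff)
  next
    fix x y :: real
    have m: "\<bar>min (2*B) a - min (2*B) b\<bar> \<le> \<bar>a - b\<bar>" for a b :: real by arith
    have "\<bar>L * \<bar>x\<bar> / Bj - L * \<bar>y\<bar> / Bj\<bar> = (L / Bj) * \<bar>\<bar>x\<bar> - \<bar>y\<bar>\<bar>"
    proof -
      have "L * \<bar>x\<bar> / Bj - L * \<bar>y\<bar> / Bj = (L / Bj) * (\<bar>x\<bar> - \<bar>y\<bar>)" using Bj by (simp add: field_simps)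
      then have "\<bar>L * \<bar>x\<bar> / Bj - L * \<bar>y\<bar> / Bj\<bar> = \<bar>L / Bj\<bar> * \<bar>\<bar>x\<bar> - \<bar>y\<bar>\<bar>" by (simp only: abs_mult)
      then show ?thesis using Lpos Bj by simp
    qed
    also have "\<dots> \<le> (L / Bj) * \<bar>x - y\<bar>" using Lpos Bj by (intro mult_left_mono abs_triangle_ineq3) auto
    finally show "\<bar>g x - g y\<bar> \<le> (L / Bj) * \<bar>x - y\<bar>" unfolding g_def using m[of "L * \<bar>x\<bar> / Bj" "L * \<bar>y\<bar> / Bj"] by linarith
  qed
  have g0: "0 \<le> g s" for s unfolding g_def using Bpos Lpos Bj by simp
  have gSH: "(\<lambda>w. g (Sn X i w)) \<in> H" using cblip1_H[OF g_cb Sn_H'] .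
  define \<gamma> where "\<gamma> = E (\<lambda>w. g (Sn X i w))"
  have \<gamma>0: "\<gamma> \<ge> 0"
  proof -
    have "E (\<lambda>_. 0) \<le> \<gamma>" unfolding \<gamma>_def by (rule mono_E[OF const_H gSH]) (use g0 in simp)
    then show ?thesis by simp
  qed
  have fdiff: "\<bar>f (T w) - f (Wn E X j w)\<bar> \<le> g (Sn X i w)" for w
  proof -
    have tw: "T w - Wn E X j w = - (Sn X i w / Bj)" unfolding T_def V_def W_eq Bj_def[symmetric]
      using Bj by (simp add: field_simps)
    have a1: "\<bar>f (T w) - f (Wn E X j w)\<bar> \<le> 2 * B" using fB[of "T w"] fB[of "Wn E X j w"] by arith
    have "\<bar>f (T w) - f (Wn E X j w)\<bar> \<le> L * \<bar>T w - Wn E X j w\<bar>" by (rule fL)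
    also have "\<dots> = L * \<bar>Sn X i w\<bar> / Bj" unfolding tw using Bj by (simp add: abs_divide)
    finally show ?thesis unfolding g_def using a1 by simp
  qed
  have stepA: "\<gamma> \<le> L * (Bi / Bj) * (1 + E' (\<lambda>w. (\<xi> w)^2) + D)"
  proof -
    define r where "r = L * Bi / Bj"
    have r: "r > 0" unfolding r_def using Lpos Bi Bj by simp
    define G1 where "G1 x = min (2 * B / r) \<bar>x\<bar>" for x
    have G1_cb: "cblip1 G1" unfolding cblip1_def
    proof (intro conjI exI allI)
      fix x show "\<bar>G1 x\<bar> \<le> 2 * B / r" unfolding G1_def using Bpos r by (simp add: abs_le_iff)
    next
      fix x y :: real
      have m: "\<bar>min (2 * B / r) a - min (2 * B / r) b\<bar> \<le> \<bar>a - b\<bar>" for a b :: real by arith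
      have "\<bar>\<bar>x\<bar> - \<bar>y\<bar>\<bar> \<le> \<bar>x - y\<bar>" by (rule abs_triangle_ineq3)
      then show "\<bar>G1 x - G1 y\<bar> \<le> 1 * \<bar>x - y\<bar>" unfolding G1_def using m[of "\<bar>x\<bar>" "\<bar>y\<bar>"] by linarith
    qed
    have G1_lip: "\<bar>G1 x - G1 y\<bar> \<le> \<bar>x - y\<bar>" for x y
    proof -
      have m: "\<bar>min (2 * B / r) a - min (2 * B / r) b\<bar> \<le> \<bar>a - b\<bar>" for a b :: real by arith
      have "\<bar>\<bar>x\<bar> - \<bar>y\<bar>\<bar> \<le> \<bar>x - y\<bar>" by (rule abs_triangle_ineq3)
      then show ?thesis unfolding G1_def using m[of "\<bar>x\<bar>" "\<bar>y\<bar>"] by linarith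
    qed
    have G1W: "(\<lambda>w. G1 (Wn E X i w)) \<in> H" using fW_H[OF G1_cb] .
    have geq: "g (Sn X i w) = r * G1 (Wn E X i w)" for w
    proof -
      have "r * G1 (Wn E X i w) = min (r * (2 * B / r)) (r * \<bar>Wn E X i w\<bar>)"
        unfolding G1_def using r by (simp add: min_def mult_le_cancel_left_pos del: times_divide_eq_right)
      also have "r * (2 * B / r) = 2 * B" using r by simp
      also have "r * \<bar>Wn E X i w\<bar> = L * \<bar>Sn X i w\<bar> / Bj"
        unfolding W_eq Bi_def[symmetric] r_def using Bi Bj by (simp add: abs_divide)
      finally show ?thesis unfolding g_def by simp
    qed
    have "\<gamma> = E (\<lambda>w. r * G1 (Wn E X i w))" unfolding \<gamma>_def geq ..
    also have "\<dots> = r * E (\<lambda>w. G1 (Wn E X i w))" using hom_E[OF G1W] r by simp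
    also have "\<dots> \<le> r * (1 + E' (\<lambda>w. (\<xi> w)^2) + D)"
    proof (rule mult_left_mono)
      have "\<bar>E (\<lambda>w. G1 (Wn E X i w)) - E' (\<lambda>w. G1 (\<xi> w))\<bar> \<le> D * e i"
        by (rule songE[OF i1 G1_cb G1_lip])
      moreover have "D * e i \<le> D" using e_bounds[OF i1] D_nonneg by (simp add: mult_left_le)
      moreover have "E' (\<lambda>w. G1 (\<xi> w)) \<le> 1 + E' (\<lambda>w. (\<xi> w)^2)"
        unfolding G1_def by (rule xi_bound) (use Bpos r in simp)
      ultimately show "E (\<lambda>w. G1 (Wn E X i w)) \<le> 1 + E' (\<lambda>w. (\<xi> w)^2) + D" by linarith
      show "0 \<le> r" using r by simp
    qed
    finally show ?thesis unfolding r_def by simp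
  qed
  have pw1: "f (T v) \<le> f (Wn E X j v) + g (Sn X i v)" "- f (T v) \<le> - f (Wn E X j v) + g (Sn X i v)" for v
    using fdiff[of v] by arith+
  have c1: "E (\<lambda>v. f (T v)) \<le> cj + \<gamma>"
  proof -
    have "E (\<lambda>v. f (T v)) \<le> E (\<lambda>v. f (Wn E X j v) + g (Sn X i v))"
      by (rule mono_E[OF fT add_H[OF fwj gSH]]) (rule pw1)
    also have "\<dots> \<le> cj + \<gamma>" unfolding cj_def \<gamma>_def by (rule sub_E[OF fwj gSH])
    finally show ?thesis .
  qed
  have c2: "E (\<lambda>v. - f (T v)) \<le> E (\<lambda>v. - f (Wn E X j v)) + \<gamma>"
  proof -
    have "E (\<lambda>v. - f (T v)) \<le> E (\<lambda>v. - f (Wn E X j v) + g (Sn X i v))"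
      by (rule mono_E[OF mfT add_H[OF mfwj gSH]]) (rule pw1)
    also have "\<dots> \<le> E (\<lambda>v. - f (Wn E X j v)) + \<gamma>" unfolding \<gamma>_def by (rule sub_E[OF mfwj gSH])
    finally show ?thesis .
  qed
  define \<delta> where "\<delta> = \<gamma> + 2 * L * D * e j"
  have mc: "cj + E (\<lambda>v. - f (Wn E X j v)) \<le> 2 * L * D * e j" unfolding cj_def by (rule mean_cert[OF j1])
  have LDe: "0 \<le> 2 * L * D * e j" using Lpos D_nonneg e_bounds[OF j1] by simp
  have dA: "E (\<lambda>v. f (T v)) - cj \<le> \<delta>" using c1 LDe unfolding \<delta>_def by linarith
  have dB: "E (\<lambda>v. - f (T v)) + cj \<le> \<delta>" using c2 mc unfolding \<delta>_def by linarith
  have \<delta>0: "\<delta> \<ge> 0" using \<gamma>0 LDe unfolding \<delta>_def by linarith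
  define u where "u a = f (a / Bi) - ci" for a
  define vv where "vv b = f (b / Bj) - cj" for b
  define \<phi> where "\<phi> a b = u a * vv b" for a b
  have u_b: "\<bar>u a\<bar> \<le> 2 * B" for a unfolding u_def using fB[of "a / Bi"] ci_b by arith
  have vv_b: "\<bar>vv a\<bar> \<le> 2 * B" for a unfolding vv_def using fB[of "a / Bj"] cj_b by arith
  have u_l: "\<bar>u a - u a'\<bar> \<le> (L / Bi) * \<bar>a - a'\<bar>" for a a'
  proof -
    have "\<bar>u a - u a'\<bar> = \<bar>f (a / Bi) - f (a' / Bi)\<bar>" unfolding u_def by simp
    also have "\<dots> \<le> L * \<bar>a / Bi - a' / Bi\<bar>" by (rule fL)
    also have "\<bar>a / Bi - a' / Bi\<bar> = \<bar>a - a'\<bar> / Bi" using Bi by (simp add: diff_divide_distrib[symmetric] abs_divide)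
    finally show ?thesis by simp
  qed
  have vv_l: "\<bar>vv a - vv a'\<bar> \<le> (L / Bj) * \<bar>a - a'\<bar>" for a a'
  proof -
    have "\<bar>vv a - vv a'\<bar> = \<bar>f (a / Bj) - f (a' / Bj)\<bar>" unfolding vv_def by simp
    also have "\<dots> \<le> L * \<bar>a / Bj - a' / Bj\<bar>" by (rule fL)
    also have "\<bar>a / Bj - a' / Bj\<bar> = \<bar>a - a'\<bar> / Bj" using Bj by (simp add: diff_divide_distrib[symmetric] abs_divide)
    finally show ?thesis by simp
  qed
  have bl: "bl2 \<phi>" unfolding \<phi>_def by (rule bl2_prod[OF u_b vv_b u_l vv_l])
  obtain B\<phi> L\<phi> where B\<phi>: "\<And>a b. \<bar>\<phi> a b\<bar> \<le> B\<phi>"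
    and L\<phi>: "\<And>a b a' b'. \<bar>\<phi> a b - \<phi> a' b'\<bar> \<le> L\<phi> * (\<bar>a - a'\<bar> + \<bar>b - b'\<bar>)"
    using bl unfolding bl2_def by metis
  have indep: "E (\<lambda>w. \<phi> (Sn X i w) (Sn X j w - Sn X i w)) = E (\<lambda>w. E (\<lambda>v. \<phi> (Sn X i w) (Sn X j v - Sn X i v)))"
    using indep_block[OF i1 less_imp_le[OF ij]] bl by blast
  define h where "h a = E (\<lambda>v. \<phi> a (V v))" for a
  have memb: "(\<lambda>v. \<phi> a (V v)) \<in> H" for a using bl2_H[OF bl const_H VH, of a] by simp
  have h_cb: "cblip1 h" unfolding cblip1_def
  proof (intro conjI exI allI)
    fix a show "\<bar>h a\<bar> \<le> B\<phi>" unfolding h_def by (rule bound_E[OF memb B\<phi>])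
  next
    fix a a' :: real
    have "\<bar>\<phi> a (V v) - \<phi> a' (V v)\<bar> \<le> L\<phi> * \<bar>a - a'\<bar>" for v using L\<phi>[of a "V v" a' "V v"] by simp
    then show "\<bar>h a - h a'\<bar> \<le> L\<phi> * \<bar>a - a'\<bar>" unfolding h_def by (rule lip_E[OF memb memb])
  qed
  have hS: "(\<lambda>w. h (Sn X i w)) \<in> H" using cblip1_H[OF h_cb Sn_H'] .
  have \<phi>T: "\<phi> a (V v) = u a * (f (T v) - cj)" for a v unfolding \<phi>_def vv_def T_def by simp
  have hb: "h a \<le> 2 * B * \<delta>" for a
  proof (cases "u a \<ge> 0")
    case True
    have fTc: "(\<lambda>v. f (T v) + (- cj)) \<in> H" by (intro add_H fT const_H)
    have "h a = E (\<lambda>v. u a * (f (T v) + (- cj)))" unfolding h_def \<phi>T by simp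
    also have "\<dots> = u a * E (\<lambda>v. f (T v) + (- cj))" by (rule hom_E[OF fTc True])
    also have "\<dots> = u a * (E (\<lambda>v. f (T v)) - cj)" by (subst add_const_E[OF fT]) simp
    also have "\<dots> \<le> u a * \<delta>" using dA True by (intro mult_left_mono) auto
    also have "\<dots> \<le> 2 * B * \<delta>" using u_b[of a] \<delta>0 by (intro mult_right_mono) auto
    finally show ?thesis .
  next
    case False
    have fTc: "(\<lambda>v. - f (T v) + cj) \<in> H" by (intro add_H mfT const_H)
    have "h a = E (\<lambda>v. (- u a) * (- f (T v) + cj))" unfolding h_def \<phi>T by (simp add: algebra_simps)
    also have "\<dots> = (- u a) * E (\<lambda>v. - f (T v) + cj)" by (rule hom_E[OF fTc]) (use False in simp)
    also have "\<dots> = (- u a) * (E (\<lambda>v. - f (T v)) + cj)" using add_const_E[OF mfT] by simp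
    also have "\<dots> \<le> (- u a) * \<delta>" using dB False by (intro mult_left_mono) auto
    also have "\<dots> \<le> 2 * B * \<delta>" using u_b[of a] \<delta>0 by (intro mult_right_mono) auto
    finally show ?thesis .
  qed
  have stepD: "E (\<lambda>w. \<phi> (Sn X i w) (V w)) \<le> 2 * B * \<delta>"
  proof -
    have "E (\<lambda>w. \<phi> (Sn X i w) (V w)) = E (\<lambda>w. h (Sn X i w))"
      unfolding h_def V_def using indep by simp
    also have "\<dots> \<le> E (\<lambda>_. 2 * B * \<delta>)" by (rule mono_E[OF hS const_H hb])
    finally show ?thesis by simp
  qed
  have \<phi>H: "(\<lambda>w. \<phi> (Sn X i w) (V w)) \<in> H" using bl2_H[OF bl Sn_H' VH] .
  have xi_i: "xi_k E X f i w = u (Sn X i w)" for w unfolding xi_k_def u_def ci_def W_eq Bi_def by simp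
  have xi_j: "xi_k E X f j w = f (Wn E X j w) - cj" for w unfolding xi_k_def cj_def by simp
  have pw: "xi_k E X f i w * xi_k E X f j w \<le> \<phi> (Sn X i w) (V w) + 2 * B * g (Sn X i w)" for w
  proof -
    have "xi_k E X f i w * xi_k E X f j w - \<phi> (Sn X i w) (V w) = u (Sn X i w) * (f (Wn E X j w) - f (T w))"
      unfolding xi_i xi_j \<phi>T by (simp add: algebra_simps)
    also have "\<dots> \<le> \<bar>u (Sn X i w)\<bar> * \<bar>f (Wn E X j w) - f (T w)\<bar>" by (simp add: abs_mult[symmetric])
    also have "\<dots> \<le> 2 * B * g (Sn X i w)"
      using u_b fdiff[of w] Bpos by (intro mult_mono) (auto simp: abs_minus_commute)
    finally show ?thesis by simp
  qed
  define \<psi> where "\<psi> a b = (f a - ci) * (f b - cj)" for a b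
  have bl\<psi>: "bl2 \<psi>"
  proof -
    have "\<bar>f a - ci\<bar> \<le> 2 * B" "\<bar>f a - cj\<bar> \<le> 2 * B" for a using fB[of a] ci_b cj_b by arith+
    moreover have "\<bar>(f a - c) - (f a' - c)\<bar> \<le> L * \<bar>a - a'\<bar>" for a a' c using fL[of a a'] by simp
    ultimately show ?thesis unfolding \<psi>_def by (intro bl2_prod) auto
  qed
  have xxH: "(\<lambda>w. xi_k E X f i w * xi_k E X f j w) \<in> H"
  proof -
    have "(\<lambda>w. \<psi> (Wn E X i w) (Wn E X j w)) \<in> H" by (rule bl2_H[OF bl\<psi> W_H W_H])
    then show ?thesis unfolding \<psi>_def xi_k_def ci_def cj_def by simp
  qed
  have gBH: "(\<lambda>w. 2 * B * g (Sn X i w)) \<in> H" using mult_H[OF gSH] .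
  have "E (\<lambda>w. xi_k E X f i w * xi_k E X f j w) \<le> E (\<lambda>w. \<phi> (Sn X i w) (V w) + 2 * B * g (Sn X i w))"
    by (rule mono_E[OF xxH add_H[OF \<phi>H gBH] pw])
  also have "\<dots> \<le> E (\<lambda>w. \<phi> (Sn X i w) (V w)) + E (\<lambda>w. 2 * B * g (Sn X i w))"
    by (rule sub_E[OF \<phi>H gBH])
  also have "E (\<lambda>w. 2 * B * g (Sn X i w)) = 2 * B * \<gamma>" unfolding \<gamma>_def using hom_E[OF gSH] Bpos by simp
  finally have "E (\<lambda>w. xi_k E X f i w * xi_k E X f j w) \<le> 2 * B * \<delta> + 2 * B * \<gamma>" using stepD by linarith
  also have "\<dots> = 4 * B * \<gamma> + 4 * B * L * D * e j" unfolding \<delta>_def by (simp add: algebra_simps)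
  also have "\<dots> \<le> 4 * B * (L * (Bi / Bj) * (1 + E' (\<lambda>w. (\<xi> w)^2) + D)) + 4 * B * L * D * e j"
    using stepA Bpos by (intro add_right_mono mult_left_mono) auto
  finally show ?thesis unfolding Bi_def Bj_def by (simp only: mult.assoc)
qed

end

context lm
begin

lemma xx_H: "(\<lambda>w. xi_k E X f i w * xi_k E X f j w) \<in> H"
proof -
  define ci where "ci = E (\<lambda>v. f (Wn E X i v))"
  define cj where "cj = E (\<lambda>v. f (Wn E X j v))"
  have ci_b: "\<bar>ci\<bar> \<le> B" unfolding ci_def by (rule bound_E[OF fW_H[OF f_cblip] fB])
  have cj_b: "\<bar>cj\<bar> \<le> B" unfolding cj_def by (rule bound_E[OF fW_H[OF f_cblip] fB])
  define \<psi> where "\<psi> a b = (f a - ci) * (f b - cj)" for a b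
  have bl\<psi>: "bl2 \<psi>"
  proof -
    have "\<bar>f a - ci\<bar> \<le> 2 * B" "\<bar>f a - cj\<bar> \<le> 2 * B" for a using fB[of a] ci_b cj_b by arith+
    moreover have "\<bar>(f a - c) - (f a' - c)\<bar> \<le> L * \<bar>a - a'\<bar>" for a a' c using fL[of a a'] by simp
    ultimately show ?thesis unfolding \<psi>_def by (intro bl2_prod) auto
  qed
  have "(\<lambda>w. \<psi> (Wn E X i w) (Wn E X j w)) \<in> H" by (rule bl2_H[OF bl\<psi> W_H W_H])
  then show ?thesis unfolding \<psi>_def xi_k_def ci_def cj_def by simp
qed

lemma pow4: "(4::real) ^ n = (2 ^ n)^2"
  by (simp add: power_mult_distrib[symmetric] power2_eq_square)

lemma ratio_bound:
  assumes l1: "1 \<le> l" and lm: "l < m" and i: "i \<in> {4^(l-1)..<4^l}" and j: "j \<in> {4^(m-1)..<4^m}"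
  shows "Bn E X i / Bn E X j \<le> 2 * (sqrt C0 / sqrt c0) * 2 powr (real l - real m)"
proof -
  have p1: "(1::nat) \<le> 4^(l-1)" "(1::nat) \<le> 4^(m-1)" by simp_all
  have a1: "4^(l-1) \<le> i" "4^(m-1) \<le> j" using i j by simp_all
  have i1: "i \<ge> 1" using a1 p1 by linarith
  have j1: "j \<ge> 1" using a1 p1 by linarith
  have ri: "real i \<le> 4 ^ l"
  proof -
    have "i \<le> 4 ^ l" using i by simp
    then have "real i \<le> real (4 ^ l)" by (rule of_nat_mono)
    then show ?thesis by simp
  qed
  have rj: "4 ^ (m - 1) \<le> real j"
  proof -
    have "4 ^ (m-1) \<le> j" using j by simp
    then have "real (4 ^ (m-1)) \<le> real j" by (rule of_nat_mono)
    then show ?thesis by simp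
  qed
  have si: "sqrt (real i) \<le> 2 ^ l"
  proof -
    have "sqrt (real i) \<le> sqrt ((2 ^ l)^2)" using ri unfolding pow4 by (rule real_sqrt_le_mono)
    then show ?thesis by simp
  qed
  have sj: "2 ^ (m - 1) \<le> sqrt (real j)"
  proof -
    have "sqrt ((2 ^ (m-1))^2) \<le> sqrt (real j)" using rj unfolding pow4 by (rule real_sqrt_le_mono)
    then show ?thesis by simp
  qed
  have c0p: "sqrt c0 > 0" using c0 by simp
  have C0p: "sqrt C0 > 0" using C0pos by simp
  have Bi: "Bn E X i \<le> sqrt C0 * 2 ^ l"
  proof -
    have "Bn E X i \<le> sqrt (i * C0)" using Bn_bounds(2)[OF i1] .
    also have "\<dots> = sqrt i * sqrt C0" by (simp add: real_sqrt_mult)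
    also have "\<dots> \<le> 2 ^ l * sqrt C0" using si C0p by (intro mult_right_mono) auto
    finally show ?thesis by (simp add: mult.commute)
  qed
  have Bj: "sqrt c0 * 2 ^ (m - 1) \<le> Bn E X j"
  proof -
    have "sqrt c0 * 2 ^ (m - 1) \<le> sqrt c0 * sqrt j" using sj c0p by (intro mult_left_mono) auto
    also have "\<dots> = sqrt (j * c0)" by (simp add: real_sqrt_mult mult.commute)
    also have "\<dots> \<le> Bn E X j" using Bn_bounds(1)[OF j1] .
    finally show ?thesis .
  qed
  have den: "sqrt c0 * 2 ^ (m - 1) > 0" using c0p by simp
  have "Bn E X i / Bn E X j \<le> (sqrt C0 * 2 ^ l) / (sqrt c0 * 2 ^ (m - 1))"
    using Bi Bj den Bn_bounds(3)[OF i1] by (intro frac_le) auto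
  also have "\<dots> = 2 * (sqrt C0 / sqrt c0) * (2 ^ l / 2 ^ m)"
  proof -
    have m: "m = Suc (m - 1)" using l1 lm by simp
    have "(2::real) ^ m = 2 * 2 ^ (m - 1)" by (subst m) simp
    then show ?thesis using c0p by (simp add: field_simps)
  qed
  also have "2 ^ l / 2 ^ m = (2::real) powr (real l - real m)"
    by (simp add: powr_diff powr_realpow)
  finally show ?thesis .
qed

lemma e_bound_m:
  assumes m1: "1 \<le> m" and j: "4^(m-1) \<le> j"
  shows "e j \<le> 2 powr (\<alpha> * (1 - real m))"
proof -
  have rj: "4 ^ (m - 1) \<le> real j"
  proof -
    have "real (4 ^ (m-1)) \<le> real j" using j by (rule of_nat_mono)
    then show ?thesis by simp
  qed
  have sj: "2 ^ (m - 1) \<le> sqrt (real j)"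
  proof -
    have "sqrt ((2 ^ (m-1))^2) \<le> sqrt (real j)" using rj unfolding pow4 by (rule real_sqrt_le_mono)
    then show ?thesis by simp
  qed
  have p: "(0::real) < 2 ^ (m - 1)" by simp
  have sjp: "sqrt (real j) > 0" using sj p by linarith
  have "1 / sqrt (real j) \<le> 1 / 2 ^ (m - 1)" using sj p sjp by (intro divide_left_mono mult_pos_pos) auto
  also have "1 / (2::real) ^ (m - 1) = 2 powr (1 - real m)"
  proof -
    have "(2::real) ^ (m - 1) = 2 powr (real (m - 1))" by (simp add: powr_realpow)
    also have "real (m - 1) = real m - 1" using m1 by simp
    finally have "1 / (2::real) ^ (m - 1) = 1 / 2 powr (real m - 1)" by simp
    also have "\<dots> = 2 powr (- (real m - 1))" by (simp only: powr_minus_divide)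
    finally show ?thesis by simp
  qed
  finally have b: "1 / sqrt (real j) \<le> 2 powr (1 - real m)" .
  have "e j \<le> (2 powr (1 - real m)) powr \<alpha>" unfolding e_def
    using b alpha by (intro powr_mono2) auto
  also have "\<dots> = 2 powr (\<alpha> * (1 - real m))" by (simp add: powr_powr mult.commute)
  finally show ?thesis .
qed

lemma sum_inv:
  assumes "1 \<le> l"
  shows "(\<Sum>i\<in>{4^(l-1)..<4^l}. 1 / real i) \<le> 3" "(\<Sum>i\<in>{4^(l-1)..<4^l}. 1 / real i) \<ge> 0"
proof -
  define n0 :: nat where "n0 = 4^(l-1)"
  have n0: "n0 \<ge> 1" unfolding n0_def by simp
  have l4: "(4::nat)^l = 4 * n0" unfolding n0_def using assms by (metis Suc_diff_le diff_Suc_1 power_Suc)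
  have "(\<Sum>i\<in>{n0..<4*n0}. 1 / real i) \<le> of_nat (card {n0..<4*n0}) * (1 / real n0)"
  proof (rule sum_bounded_above)
    fix i assume "i \<in> {n0..<4*n0}"
    then have "real n0 \<le> real i" by simp
    then show "1 / real i \<le> 1 / real n0" using n0 by (intro divide_left_mono) auto
  qed
  also have "\<dots> = 3" using n0 by simp
  finally show "(\<Sum>i\<in>{4^(l-1)..<4^l}. 1 / real i) \<le> 3" unfolding l4 n0_def[symmetric] .
  show "(\<Sum>i\<in>{4^(l-1)..<4^l}. 1 / real i) \<ge> 0" by (intro sum_nonneg) simp
qed

lemma Z_bound:
  "\<exists>M3 M4. M3 > 0 \<and> M4 > 0 \<and>
           (\<forall>l m. 1 \<le> l \<longrightarrow> l < m \<longrightarrow>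
              E (\<lambda>w. Z_l E X f l w * Z_l E X f m w)
                \<le> 9 * M3 * 2 powr (real l - real m) + 9 * M4 * 2 powr (\<alpha> * (1 - real m)))"
proof -
  define s2 where "s2 = E' (\<lambda>w. (\<xi> w)^2)"
  define P where "P = 4 * B * L * (2 * (sqrt C0 / sqrt c0)) * (1 + s2 + D)"
  define Q where "Q = 4 * B * L * D"
  define M3 where "M3 = max P 1"
  define M4 where "M4 = max Q 1"
  have s2: "s2 \<ge> 0" unfolding s2_def by (rule s2_nonneg)
  have Q0: "Q \<ge> 0" unfolding Q_def using Bpos Lpos D_nonneg by simp
  show ?thesis
  proof (intro exI conjI allI impI)
    show "M3 > 0" "M4 > 0" unfolding M3_def M4_def by auto
    fix l m :: nat assume l1: "1 \<le> l" and lm: "l < m"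
    have m1: "1 \<le> m" using l1 lm by simp
    define Il where "Il = {4^(l-1)..<(4::nat)^l}"
    define Im where "Im = {4^(m-1)..<(4::nat)^m}"
    define R where "R = M3 * 2 powr (real l - real m) + M4 * 2 powr (\<alpha> * (1 - real m))"
    have R0: "R \<ge> 0" unfolding R_def M3_def M4_def by (intro add_nonneg_nonneg mult_nonneg_nonneg) auto
    have pair: "E (\<lambda>w. xi_k E X f i w * xi_k E X f j w) \<le> R" if i: "i \<in> Il" and j: "j \<in> Im" for i j
    proof -
      have p1: "(1::nat) \<le> 4^(l-1)" by simp
      have a1: "4^(l-1) \<le> i" using i unfolding Il_def by simp
      have i1: "1 \<le> i" using a1 p1 by linarith
      have ij: "i < j"
      proof -
        have "i < 4^l" using i unfolding Il_def by simp
        also have "(4::nat)^l \<le> 4^(m-1)" using lm by (intro power_increasing) auto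
        also have "4^(m-1) \<le> j" using j unfolding Im_def by simp
        finally show ?thesis .
      qed
      have rb: "Bn E X i / Bn E X j \<le> 2 * (sqrt C0 / sqrt c0) * 2 powr (real l - real m)"
        using ratio_bound[OF l1 lm] i j unfolding Il_def Im_def by blast
      have eb: "e j \<le> 2 powr (\<alpha> * (1 - real m))"
        using e_bound_m[OF m1] j unfolding Im_def by simp
      have A0: "0 \<le> 4 * B * L" using Bpos Lpos by simp
      have A1: "0 \<le> 1 + s2 + D" using s2 D_nonneg by simp
      have "E (\<lambda>w. xi_k E X f i w * xi_k E X f j w)
          \<le> 4 * B * L * (Bn E X i / Bn E X j) * (1 + s2 + D) + 4 * B * L * D * e j"
        using pair_bound[OF i1 ij] unfolding s2_def .
      also have "\<dots> \<le> 4 * B * L * (2 * (sqrt C0 / sqrt c0) * 2 powr (real l - real m)) * (1 + s2 + D)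
                     + Q * 2 powr (\<alpha> * (1 - real m))"
      proof (rule add_mono)
        show "4 * B * L * (Bn E X i / Bn E X j) * (1 + s2 + D)
          \<le> 4 * B * L * (2 * (sqrt C0 / sqrt c0) * 2 powr (real l - real m)) * (1 + s2 + D)"
          using rb A0 A1 by (intro mult_right_mono mult_left_mono) auto
        show "4 * B * L * D * e j \<le> Q * 2 powr (\<alpha> * (1 - real m))"
          unfolding Q_def using eb Q0 unfolding Q_def by (intro mult_left_mono) auto
      qed
      also have "\<dots> = P * 2 powr (real l - real m) + Q * 2 powr (\<alpha> * (1 - real m))"
        unfolding P_def by (simp add: algebra_simps)
      also have "\<dots> \<le> R" unfolding R_def M3_def M4_def
        by (intro add_mono mult_right_mono) auto
      finally show ?thesis .
    qed
    have ZZ: "Z_l E X f l w * Z_l E X f m w =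
        (\<Sum>i\<in>Il. \<Sum>j\<in>Im. (1 / (real i * real j)) * (xi_k E X f i w * xi_k E X f j w))" for w
      unfolding Z_l_def Il_def[symmetric] Im_def[symmetric] sum_product
      by (intro sum.cong refl) (simp add: field_simps)
    have YH: "(\<lambda>w. (1 / (real i * real j)) * (xi_k E X f i w * xi_k E X f j w)) \<in> H" for i j
      by (intro mult_H xx_H)
    have YE: "E (\<lambda>w. (1 / (real i * real j)) * (xi_k E X f i w * xi_k E X f j w))
        = (1 / (real i * real j)) * E (\<lambda>w. xi_k E X f i w * xi_k E X f j w)" for i j
      by (rule hom_E[OF xx_H]) simp
    have "E (\<lambda>w. Z_l E X f l w * Z_l E X f m w) =
        E (\<lambda>w. \<Sum>i\<in>Il. \<Sum>j\<in>Im. (1 / (real i * real j)) * (xi_k E X f i w * xi_k E X f j w))"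
      unfolding ZZ ..
    also have "\<dots> \<le> (\<Sum>i\<in>Il. E (\<lambda>w. \<Sum>j\<in>Im. (1 / (real i * real j)) * (xi_k E X f i w * xi_k E X f j w)))"
      unfolding Il_def Im_def by (intro sum_E sum_H YH) auto
    also have "\<dots> \<le> (\<Sum>i\<in>Il. \<Sum>j\<in>Im. E (\<lambda>w. (1 / (real i * real j)) * (xi_k E X f i w * xi_k E X f j w)))"
      unfolding Im_def by (intro sum_mono sum_E YH) auto
    also have "\<dots> \<le> (\<Sum>i\<in>Il. \<Sum>j\<in>Im. (1 / (real i * real j)) * R)"
      unfolding YE using pair by (intro sum_mono mult_left_mono) auto
    also have "\<dots> = (\<Sum>i\<in>Il. \<Sum>j\<in>Im. R * ((1 / real i) * (1 / real j)))"
      by (intro sum.cong refl) (simp add: divide_inverse mult_ac)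
    also have "\<dots> = (\<Sum>i\<in>Il. R * (1 / real i) * (\<Sum>j\<in>Im. 1 / real j))"
      by (intro sum.cong refl) (simp add: sum_distrib_left mult.assoc)
    also have "\<dots> = R * (\<Sum>i\<in>Il. 1 / real i) * (\<Sum>j\<in>Im. 1 / real j)"
      by (simp only: sum_distrib_right[symmetric] sum_distrib_left[symmetric])
    also have "\<dots> = R * ((\<Sum>i\<in>Il. 1 / real i) * (\<Sum>j\<in>Im. 1 / real j))"
      by (simp only: mult.assoc)
    also have "\<dots> \<le> R * (3 * 3)"
      using sum_inv[OF l1] sum_inv[OF m1] R0 unfolding Il_def Im_def
      by (intro mult_left_mono mult_mono) auto
    also have "\<dots> = 9 * M3 * 2 powr (real l - real m) + 9 * M4 * 2 powr (\<alpha> * (1 - real m))"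
      unfolding R_def by (simp add: algebra_simps)
    finally show "E (\<lambda>w. Z_l E X f l w * Z_l E X f m w)
                \<le> 9 * M3 * 2 powr (real l - real m) + 9 * M4 * 2 powr (\<alpha> * (1 - real m))" .
  qed
qed

end

theorem lemma4p3:
  fixes M :: "'w measure" and H :: "('w \<Rightarrow> real) set" and E :: "('w \<Rightarrow> real) \<Rightarrow> real"
    and M' :: "'v measure" and H' :: "('v \<Rightarrow> real) set" and E' :: "('v \<Rightarrow> real) \<Rightarrow> real"
    and X :: "nat \<Rightarrow> 'w \<Rightarrow> real" and \<xi> :: "'v \<Rightarrow> real"
    and \<beta> \<alpha> C :: real
  assumes "sublinear_space M H E" and "condA H E"
    and "sublinear_space M' H' E'" and "condA H' E'"
    and "\<beta> \<ge> 1"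
    and "standing H E \<beta> X"
    and "G_normal H' E' \<xi>"
    and "sqrt (E' (\<lambda>w. (\<xi> w)^2)) = 2 * \<beta> / (1 + \<beta>)"
    and "sqrt (- (E' (\<lambda>w. - ((\<xi> w)^2)))) = 2 / (1 + \<beta>)"
    and "0 < \<alpha>" and "\<alpha> < 1" and "C > 0"
    and "song_bound H E E' \<xi> \<beta> \<alpha> C"
    and "\<forall>i\<ge>1. (\<lambda>w. \<bar>X i w\<bar> powr (2 + \<alpha>)) \<in> H"
    and "\<exists>K. \<forall>i\<ge>1. E (\<lambda>w. \<bar>X i w\<bar> powr (2 + \<alpha>)) \<le> K"
  shows "\<forall>f\<in>calH E' \<xi>. \<exists>M3 M4. M3 > 0 \<and> M4 > 0 \<and>
           (\<forall>l m. 1 \<le> l \<longrightarrow> l < m \<longrightarrow>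
              E (\<lambda>w. Z_l E X f l w * Z_l E X f m w)
                \<le> 9 * M3 * 2 powr (real l - real m) + 9 * M4 * 2 powr (\<alpha> * (1 - real m)))"
proof (intro ballI)
  fix f assume fH: "f \<in> calH E' \<xi>"
  have cb: "cblip1 f" and fc: "E' (\<lambda>w. f (\<xi> w)) = - E' (\<lambda>w. - f (\<xi> w))"
    using fH unfolding calH_def by auto
  obtain Bf where Bf: "\<forall>x. \<bar>f x\<bar> \<le> Bf" using cb unfolding cblip1_def by (elim conjE exE)
  obtain Lf where Lf: "\<forall>x y. \<bar>f x - f y\<bar> \<le> Lf * \<bar>x - y\<bar>" using cb unfolding cblip1_def by (elim conjE exE)
  define B where "B = \<bar>Bf\<bar> + 1"
  define L where "L = \<bar>Lf\<bar> + 1"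
  have Bpos: "0 < B" unfolding B_def by simp
  have Lpos: "0 < L" unfolding L_def by simp
  have fB: "\<And>x. \<bar>f x\<bar> \<le> B" using Bf unfolding B_def by (metis abs_ge_self add_increasing2 order_trans zero_le_one)
  have fL: "\<And>x y. \<bar>f x - f y\<bar> \<le> L * \<bar>x - y\<bar>"
  proof -
    fix x y
    have "Lf * \<bar>x - y\<bar> \<le> L * \<bar>x - y\<bar>" unfolding L_def by (intro mult_right_mono) auto
    then show "\<bar>f x - f y\<bar> \<le> L * \<bar>x - y\<bar>" using Lf by (metis order_trans)
  qed
  have st: "(\<forall>i\<ge>1. X i \<in> H \<and> (\<lambda>w. (X i w)^2) \<in> H)" "indep_seq E X"
     "(\<forall>i\<ge>1. sig_up E X i / sig_lo E X i = \<beta>)"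
     "(\<exists>c>0. \<forall>i\<ge>1. c \<le> (sig_lo E X i)^2)" "(\<exists>C. \<forall>i\<ge>1. (sig_up E X i)^2 \<le> C)"
    using assms(6) unfolding standing_def by auto
  obtain c0 where c0: "0 < c0" and lo: "\<And>i. 1 \<le> i \<Longrightarrow> c0 \<le> (sig_lo E X i)^2" using st(4) by auto
  obtain C0 where up: "\<And>i. 1 \<le> i \<Longrightarrow> (sig_up E X i)^2 \<le> C0" using st(5) by auto
  obtain K where K: "\<forall>i\<ge>1. E (\<lambda>w. \<bar>X i w\<bar> powr (2 + \<alpha>)) \<le> K" using assms(15) by auto
  define K' where "K' = max K 0"
  have K0: "0 \<le> K'" unfolding K'_def by simp
  have Kb: "\<And>i. 1 \<le> i \<Longrightarrow> E (\<lambda>w. \<bar>X i w\<bar> powr (2 + \<alpha>)) \<le> K'"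
    using K unfolding K'_def by (metis max.coboundedI1)
  have X_H: "\<And>i. 1 \<le> i \<Longrightarrow> X i \<in> H" using st(1) by auto
  have Xsq: "\<And>i. 1 \<le> i \<Longrightarrow> (\<lambda>w. (X i w)^2) \<in> H" using st(1) by auto
  have ratio: "\<And>i. 1 \<le> i \<Longrightarrow> sig_up E X i / sig_lo E X i = \<beta>" using st(3) by auto
  have xiH: "\<xi> \<in> H'" and xi2H: "(\<lambda>w. (\<xi> w)^2) \<in> H'" using assms(7) unfolding G_normal_def by auto
  have sX: "\<forall>n\<ge>1. \<forall>g. cblip1 g \<longrightarrow> (\<forall>x y. \<bar>g x - g y\<bar> \<le> \<bar>x - y\<bar>) \<longrightarrow>
           \<bar>E (\<lambda>w. g (Wn E X n w)) - E' (\<lambda>w. g (\<xi> w))\<bar> \<le>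
             C * Max ((\<lambda>i. E (\<lambda>w. \<bar>X i w\<bar> powr (2 + \<alpha>)) / sigm E X i powr (2 + \<alpha>)
                          * (sigm E X i / Bn E X n) powr \<alpha>) ` {1..n})"
    using assms(13) assms(6) assms(14) unfolding song_bound_def by blast
  have songb: "\<And>n g. 1 \<le> n \<Longrightarrow> cblip1 g \<Longrightarrow> (\<forall>x y. \<bar>g x - g y\<bar> \<le> \<bar>x - y\<bar>) \<Longrightarrow>
           \<bar>E (\<lambda>w. g (Wn E X n w)) - E' (\<lambda>w. g (\<xi> w))\<bar> \<le>
             C * Max ((\<lambda>i. E (\<lambda>w. \<bar>X i w\<bar> powr (2 + \<alpha>)) / sigm E X i powr (2 + \<alpha>)
                          * (sigm E X i / Bn E X n) powr \<alpha>) ` {1..n})"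
    using sX by blast
  have beta: "1 \<le> \<beta>" using assms(5) by simp
  have lmI: "lm M H E X M' H' E' \<xi> \<beta> \<alpha> C c0 C0 K' B L f"
    by (intro lm.intro sli.intro sl.intro sli_axioms.intro lm_axioms.intro)
       (fact assms(1) assms(3) st(2) X_H c0 lo up ratio beta Xsq K0 Kb assms(10) assms(12) songb xiH xi2H
          fB fL Bpos Lpos fc)+
  show "\<exists>M3 M4. M3 > 0 \<and> M4 > 0 \<and>
           (\<forall>l m. 1 \<le> l \<longrightarrow> l < m \<longrightarrow>
              E (\<lambda>w. Z_l E X f l w * Z_l E X f m w)
                \<le> 9 * M3 * 2 powr (real l - real m) + 9 * M4 * 2 powr (\<alpha> * (1 - real m)))"
    by (rule lm.Z_bound[OF lmI])
qed

end
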